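(* Assume the setting below, and suppose the reduced solution $u_0$ is a linear function. On the Shishkin mesh $S_N$ (i.e. $\lambda=N$) with mesh parameter $a\ge a_*:=\beta/(b(0)-\beta)$, let $U^N$ be the solution of the discrete problem $U^N_0=0$, $L^NU^N_i=f(x_i)$ for $1\le i\le N-1$, $U^N_N=0$. Then \[ \|u^N-U^N\|\le C\max\left\{\varepsilon N^{-2}(\ln N)^2,\ N^{-a}\right\}, \] with $C$ independent of $\varepsilon$ and $N$.
   Context: Let $0<\varepsilon<1$. Let $b,c,f\in C^4[0,1]$, and let $\beta$ be a constant with $b(x)>\beta>0$ and $c(x)\ge0$ on $[0,1]$. Let $u$ be the solution of $-\varepsilon u''-bu'+cu=f$ on $(0,1)$ with $u(0)=u(1)=0$. The reduced solution $u_0$ is the solution of $-bu_0'+cu_0=f$ on $(0,1)$ with $u_0(1)=0$. Mesh $S_\lambda$, $\lambda\in\{N,\varepsilon^{-1}\}$. $N$ is a positive integer. $Q\in(0,1)$ is a fixed rational with $J=QN$ an integer, and $a>0$. Set $\xi=(a\varepsilon/\beta)\ln\lambda$, assumed $\le Q$, and $h=\xi/J$, $H=(1-\xi)/(N-J)$. The mesh points are $x_i=ih$ ($0\le i\le J$) and $x_i=\xi+(i-J)H$ ($J\le i\le N$). Write $h_i=x_i-x_{i-1}$ and $\hbar_i=(h_i+h_{i+1})/2$. Scheme. $D^+U_i=(U_{i+1}-U_i)/h_{i+1}$, $D^-U_i=(U_i-U_{i-1})/h_i$, $D''U_i=(D^+U_i-D^-U_i)/\hbar_i$. Let $\sigma(\rho)=2\rho/(e^{2\rho}-1)$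 for $\rho>0$, $\sigma(0)=1$, and $\rho_i=b(x_i)h_{i+1}/(2\varepsilon)$. The ASI operator is $L^NU_i=-\varepsilon\sigma(\rho_i)D''U_i-b(x_i)D^+U_i+c(x_i)U_i$. $u^N$ is the restriction of $u$ to the mesh, and $\|U\|=\max_i|U_i|$. *)

theory Defs
  imports "HOL-Analysis.Analysis"
begin

definition Ck_on :: "nat \<Rightarrow> real set \<Rightarrow> (real \<Rightarrow> real) \<Rightarrow> bool" where
  "Ck_on k S g \<longleftrightarrow> (\<exists>D. (\<forall>x\<in>S. D 0 x = g x) \<and>
      (\<forall>j<k. \<forall>x\<in>S. (D j has_real_derivative D (Suc j) x) (at x within S)) \<and>
      (\<forall>j\<le>k. continuous_on S (D j)))"

definition bvp_solution ::
  "real \<Rightarrow> (real \<Rightarrow> real) \<Rightarrow> (real \<Rightarrow> real) \<Rightarrow> (real \<Rightarrow> real) \<Rightarrow> (real \<Rightarrow> real) \<Rightarrow> bool" where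
  "bvp_solution eps b c f u \<longleftrightarrow> continuous_on {0..1} u \<and> u 0 = 0 \<and> u 1 = 0 \<and>
     (\<exists>u' u''. \<forall>x\<in>{0<..<1}. (u has_real_derivative u' x) (at x) \<and>
        (u' has_real_derivative u'' x) (at x) \<and>
        - eps * u'' x - b x * u' x + c x * u x = f x)"

definition reduced_solution ::
  "(real \<Rightarrow> real) \<Rightarrow> (real \<Rightarrow> real) \<Rightarrow> (real \<Rightarrow> real) \<Rightarrow> (real \<Rightarrow> real) \<Rightarrow> bool" where
  "reduced_solution b c f u0 \<longleftrightarrow> continuous_on {0..1} u0 \<and> u0 1 = 0 \<and>
     (\<exists>u0'. \<forall>x\<in>{0<..<1}. (u0 has_real_derivative u0' x) (at x) \<and>
        - b x * u0' x + c x * u0 x = f x)"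

definition trans_pt :: "real \<Rightarrow> real \<Rightarrow> real \<Rightarrow> real \<Rightarrow> real" where
  "trans_pt a eps beta lam = a * eps / beta * ln lam"

definition shishkin_mesh :: "real \<Rightarrow> real \<Rightarrow> real \<Rightarrow> real \<Rightarrow> real \<Rightarrow> nat \<Rightarrow> nat \<Rightarrow> real" where
  "shishkin_mesh lam a eps beta Q N i =
     (let xi = trans_pt a eps beta lam; J = Q * real N;
          h = xi / J; H = (1 - xi) / (real N - J)
      in if real i \<le> J then real i * h else xi + (real i - J) * H)"

definition step :: "(nat \<Rightarrow> real) \<Rightarrow> nat \<Rightarrow> real" where
  "step x i = x i - x (i - 1)"

definition Dplus :: "(nat \<Rightarrow> real) \<Rightarrow> (nat \<Rightarrow> real) \<Rightarrow> nat \<Rightarrow> real" where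
  "Dplus x U i = (U (i + 1) - U i) / step x (i + 1)"

definition Dminus :: "(nat \<Rightarrow> real) \<Rightarrow> (nat \<Rightarrow> real) \<Rightarrow> nat \<Rightarrow> real" where
  "Dminus x U i = (U i - U (i - 1)) / step x i"

definition D2 :: "(nat \<Rightarrow> real) \<Rightarrow> (nat \<Rightarrow> real) \<Rightarrow> nat \<Rightarrow> real" where
  "D2 x U i = (Dplus x U i - Dminus x U i) / ((step x i + step x (i + 1)) / 2)"

definition sigma :: "real \<Rightarrow> real" where
  "sigma \<rho> = (if \<rho> = 0 then 1 else 2 * \<rho> / (exp (2 * \<rho>) - 1))"

definition LN :: "real \<Rightarrow> (real \<Rightarrow> real) \<Rightarrow> (real \<Rightarrow> real) \<Rightarrow> (nat \<Rightarrow> real) \<Rightarrow> (nat \<Rightarrow> real) \<Rightarrow> nat \<Rightarrow> real" where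
  "LN eps b c x U i =
     (let \<rho> = b (x i) * step x (i + 1) / (2 * eps)
      in - eps * sigma \<rho> * D2 x U i - b (x i) * Dplus x U i + c (x i) * U i)"

end

theory Submission
  imports Defs
begin

lemma deriv_bound_interval:
  fixes f f' :: "real \<Rightarrow> real"
  assumes ab: "a \<le> b" and cont: "continuous_on {a..b} f"
    and der: "\<And>x. a < x \<Longrightarrow> x < b \<Longrightarrow> (f has_real_derivative f' x) (at x)"
    and bd: "\<And>x. a < x \<Longrightarrow> x < b \<Longrightarrow> \<bar>f' x\<bar> \<le> K"
  shows "\<bar>f b - f a\<bar> \<le> K * (b - a)"
proof (cases "a = b")
  case True then show ?thesis by simp
next
  case False
  then have "a < b" using ab by simp
  from MVT[OF this cont] der obtain l z where z: "a < z" "z < b" "DERIV f z :> l" "f b - f a = (b - a) * l"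
    using real_differentiable_def by blast
  have "l = f' z" using DERIV_unique[OF z(3) der[OF z(1,2)]] .
  then have "\<bar>f b - f a\<bar> = (b - a) * \<bar>f' z\<bar>" using z(4) ab by (simp add: abs_mult)
  also have "\<dots> \<le> (b - a) * K" using bd[OF z(1,2)] ab by (intro mult_left_mono) auto
  finally show ?thesis by (simp add: mult.commute)
qed

lemma deriv_bound_pts:
  fixes f f' :: "real \<Rightarrow> real"
  assumes "lo \<le> s" "s \<le> hi" "lo \<le> t" "t \<le> hi" and cont: "continuous_on {lo..hi} f"
    and der: "\<And>x. lo < x \<Longrightarrow> x < hi \<Longrightarrow> (f has_real_derivative f' x) (at x)"
    and bd: "\<And>x. lo < x \<Longrightarrow> x < hi \<Longrightarrow> \<bar>f' x\<bar> \<le> K"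
  shows "\<bar>f t - f s\<bar> \<le> K * \<bar>t - s\<bar>"
proof (cases "s \<le> t")
  case True
  have "\<bar>f t - f s\<bar> \<le> K * (t - s)"
    by (rule deriv_bound_interval[of s t f f' K, OF True continuous_on_subset[OF cont]]) (use assms in auto)
  then show ?thesis using True by simp
next
  case False
  have "\<bar>f s - f t\<bar> \<le> K * (s - t)"
    by (rule deriv_bound_interval[of t s f f' K]) (use assms False in \<open>auto intro: continuous_on_subset[OF cont]\<close>)
  then show ?thesis using False by (simp add: abs_minus_commute)
qed

lemma deriv_bound_open:
  fixes f f' :: "real \<Rightarrow> real"
  assumes "lo < s" "s < hi" "lo < t" "t < hi"
    and der: "\<And>x. lo < x \<Longrightarrow> x < hi \<Longrightarrow> (f has_real_derivative f' x) (at x)"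
    and bd: "\<And>x. lo < x \<Longrightarrow> x < hi \<Longrightarrow> \<bar>f' x\<bar> \<le> K"
  shows "\<bar>f t - f s\<bar> \<le> K * \<bar>t - s\<bar>"
proof -
  have cont: "continuous_on {min s t..max s t} f"
  proof (rule continuous_at_imp_continuous_on, rule ballI)
    fix x assume "x \<in> {min s t..max s t}"
    then have "lo < x" "x < hi" using assms(1-4) by (auto simp: min_def max_def split: if_splits)
    from DERIV_continuous[OF der[OF this]] show "isCont f x" .
  qed
  show ?thesis
    by (rule deriv_bound_pts[OF _ _ _ _ cont, of s t f']) (use assms in auto)
qed

lemma nonneg_from_deriv:
  fixes g g' :: "real \<Rightarrow> real"
  assumes "0 \<le> t" "g 0 = 0" "\<And>x. 0 \<le> x \<Longrightarrow> (g has_real_derivative g' x) (at x)"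
    "\<And>x. 0 \<le> x \<Longrightarrow> g' x \<ge> 0"
  shows "g t \<ge> 0"
proof -
  have "g 0 \<le> g t"
    by (rule DERIV_nonneg_imp_nondecreasing[OF assms(1)]) (use assms in auto)
  then show ?thesis using assms by simp
qed

lemma exp_h_nonneg: "0 \<le> (t::real) \<Longrightarrow> 0 \<le> (t - 2) * exp t + t + 2"
proof -
  assume t: "0 \<le> t"
  have h1: "0 \<le> (x - 1) * exp x + 1" if "0 \<le> x" for x :: real
    by (rule nonneg_from_deriv[where g="\<lambda>x. (x - 1) * exp x + 1" and g'="\<lambda>x. x * exp x", OF that])
       (auto intro!: derivative_eq_intros simp: algebra_simps)
  show ?thesis
  proof (rule nonneg_from_deriv[where g="\<lambda>x. (x - 2) * exp x + x + 2" and g'="\<lambda>x. (x - 1) * exp x + 1", OF t])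
    fix x :: real assume "0 \<le> x"
    then show "0 \<le> (x - 1) * exp x + 1" by (rule h1)
  qed (auto intro!: derivative_eq_intros simp: algebra_simps)
qed

lemma exp_chord:
  fixes x y :: real
  assumes "0 < x" "x \<le> y"
  shows "(exp x - 1 - x) / x\<^sup>2 \<le> (exp y - 1 - y) / y\<^sup>2"
proof -
  let ?g = "\<lambda>t::real. (exp t - 1 - t) / t\<^sup>2"
  let ?g' = "\<lambda>t::real. ((t - 2) * exp t + t + 2) / t ^ 3"
  show ?thesis
  proof (rule DERIV_nonneg_imp_nondecreasing[OF assms(2), where f="?g"])
    fix z assume z: "x \<le> z" "z \<le> y"
    then have zp: "z > 0" using assms by simp
    have "(?g has_real_derivative ?g' z) (at z)"
      using zp
      by (auto intro!: derivative_eq_intros simp: power2_eq_square power3_eq_cube field_simps)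
         (auto simp: algebra_simps)?
    moreover have "?g' z \<ge> 0" using exp_h_nonneg[of z] zp by simp
    ultimately show "\<exists>y. (?g has_real_derivative y) (at z) \<and> 0 \<le> y" by blast
  qed
qed

lemma sinh_ge: "0 \<le> (y::real) \<Longrightarrow> 2 * y \<le> exp y - exp (- y)"
proof -
  assume y: "0 \<le> y"
  have am: "0 \<le> exp x + exp (-x) - 2" for x :: real
  proof -
    have "0 \<le> (exp (x/2) - exp (-x/2))\<^sup>2" by simp
    also have "\<dots> = exp x + exp (-x) - 2"
      by (simp add: power2_eq_square algebra_simps flip: exp_add)
    finally show ?thesis .
  qed
  have "0 \<le> exp y - exp (-y) - 2 * y"
    by (rule nonneg_from_deriv[where g="\<lambda>x. exp x - exp (-x) - 2 * x" and g'="\<lambda>x. exp x + exp (-x) - 2", OF y])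
       (auto intro!: derivative_eq_intros, use am in \<open>fastforce simp: algebra_simps\<close>)
  then show ?thesis by simp
qed

lemma sigma_pos: "\<rho> > 0 \<Longrightarrow> sigma \<rho> > 0"
  unfolding sigma_def by (auto intro!: divide_pos_pos simp: one_less_exp_iff)

lemma sigma_le1: "\<rho> > 0 \<Longrightarrow> sigma \<rho> \<le> 1"
proof -
  assume r: "\<rho> > 0"
  have "1 + 2 * \<rho> \<le> exp (2 * \<rho>)" using exp_ge_add_one_self[of "2*\<rho>"] by linarith
  then have "2 * \<rho> \<le> exp (2 * \<rho>) - 1" by linarith
  moreover have "exp (2 * \<rho>) - 1 > 0" using r by (simp add: one_less_exp_iff)
  ultimately show ?thesis using r unfolding sigma_def by (auto simp: divide_simps)
qed

lemma sigma_approx: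
  assumes r: "\<rho> > 0"
  shows "\<bar>sigma \<rho> + \<rho> - 1\<bar> \<le> 2 * \<rho>\<^sup>2 * exp (2 * \<rho>)"
proof -
  define t where "t = 2 * \<rho>"
  have t: "t > 0" using r t_def by simp
  define n where "n s = (s/2) * (exp s + 1) - exp s + 1" for s :: real
  define n1 where "n1 s = (1 - exp s + s * exp s) / 2" for s :: real
  define n2 where "n2 s = s * exp s / 2" for s :: real
  have dn: "(n has_real_derivative n1 s) (at s)" for s
    unfolding n_def n1_def by (auto intro!: derivative_eq_intros simp: field_simps)
  have dn1: "(n1 has_real_derivative n2 s) (at s)" for s
    unfolding n1_def n2_def by (auto intro!: derivative_eq_intros simp: field_simps)
  have b2: "\<bar>n2 s\<bar> \<le> t * exp t / 2" if "0 < s" "s < t" for s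
  proof -
    have "\<bar>n2 s\<bar> = s * exp s / 2" using that by (simp add: n2_def)
    also have "\<dots> \<le> t * exp t / 2" using that by (intro divide_right_mono mult_mono) auto
    finally show ?thesis .
  qed
  have b1: "\<bar>n1 s\<bar> \<le> t * exp t / 2 * t" if "0 \<le> s" "s \<le> t" for s
  proof -
    have "\<bar>n1 s - n1 0\<bar> \<le> t * exp t / 2 * \<bar>s - 0\<bar>"
      by (rule deriv_bound_pts[where lo=0 and hi=t and f'=n2])
         (use that t dn1 b2 in \<open>auto intro!: continuous_at_imp_continuous_on DERIV_continuous\<close>)
    also have "\<dots> \<le> t * exp t / 2 * t" using that t by (intro mult_left_mono) auto
    finally show ?thesis by (simp add: n1_def)
  qed
  have "\<bar>n t - n 0\<bar> \<le> t * exp t / 2 * t * \<bar>t - 0\<bar>"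
    by (rule deriv_bound_pts[where lo=0 and hi=t and f'=n1])
       (use t dn b1 in \<open>auto intro!: continuous_at_imp_continuous_on DERIV_continuous\<close>)
  then have nb: "\<bar>n t\<bar> \<le> t^3 * exp t / 2" using t by (simp add: n_def power3_eq_cube mult_ac)
  have et: "t \<le> exp t - 1" using exp_ge_add_one_self[of t] by linarith
  have eq: "sigma \<rho> + \<rho> - 1 = n t / (exp t - 1)"
    using t r unfolding sigma_def n_def t_def by (auto simp: field_simps)
  have "\<bar>n t / (exp t - 1)\<bar> = \<bar>n t\<bar> / (exp t - 1)" using t et by simp
  also have "\<dots> \<le> (t^3 * exp t / 2) / t" using t et nb
    by (intro frac_le) auto
  also have "\<dots> = t^2 * exp t / 2" using t by (simp add: power2_eq_square power3_eq_cube)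
  finally show ?thesis using eq by (simp add: t_def power2_eq_square)
qed

lemma trans_ineq:
  fixes x y :: real
  assumes "0 < x" "x \<le> y"
  shows "2 * y\<^sup>2 * ((exp x - 1) / x) \<le> (exp y - 2 + exp (-y)) * (x + y) + 2 * y * (1 - exp (-y))"
proof -
  have y: "0 < y" using assms by simp
  have ch: "(exp x - 1 - x) / x\<^sup>2 \<le> (exp y - 1 - y) / y\<^sup>2" by (rule exp_chord[OF assms])
  have e1: "(exp x - 1) / x = 1 + x * ((exp x - 1 - x) / x\<^sup>2)"
    using assms by (simp add: field_simps power2_eq_square)
  have "(exp x - 1) / x \<le> 1 + x * ((exp y - 1 - y) / y\<^sup>2)"
    unfolding e1 using ch assms by (intro add_left_mono mult_left_mono) auto
  then have "2 * y\<^sup>2 * ((exp x - 1) / x) \<le> 2 * y\<^sup>2 * (1 + x * ((exp y - 1 - y) / y\<^sup>2))"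
    by (intro mult_left_mono) auto
  also have "\<dots> = 2 * y\<^sup>2 + 2 * x * (exp y - 1 - y)" using y by (simp add: field_simps power2_eq_square)
  also have "\<dots> \<le> (exp y - 2 + exp (-y)) * (x + y) + 2 * y * (1 - exp (-y))"
  proof -
    have s: "2 * y \<le> exp y - exp (-y)" using sinh_ge[of y] y by simp
    have "0 \<le> (y - x) * (exp y - exp (-y) - 2 * y)" using s assms by (intro mult_nonneg_nonneg) auto
    then show ?thesis by (simp add: algebra_simps power2_eq_square)
  qed
  finally show ?thesis .
qed

lemma div_lin_aux: "((\<alpha>::real) * A + B) / s = \<alpha> * (A / s) + B / s"
  by (simp add: add_divide_distrib)

lemma Dplus_lin: "Dplus x (\<lambda>j. \<alpha> * F j + G j) i = \<alpha> * Dplus x F i + Dplus x G i"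
proof -
  have "(\<alpha> * F (i+1) + G (i+1) - (\<alpha> * F i + G i)) = \<alpha> * (F (i+1) - F i) + (G (i+1) - G i)"
    by (simp add: algebra_simps)
  then show ?thesis unfolding Dplus_def by (simp only: div_lin_aux)
qed

lemma Dminus_lin: "Dminus x (\<lambda>j. \<alpha> * F j + G j) i = \<alpha> * Dminus x F i + Dminus x G i"
proof -
  have "(\<alpha> * F i + G i - (\<alpha> * F (i-1) + G (i-1))) = \<alpha> * (F i - F (i-1)) + (G i - G (i-1))"
    by (simp add: algebra_simps)
  then show ?thesis unfolding Dminus_def by (simp only: div_lin_aux)
qed

lemma D2_lin: "D2 x (\<lambda>j. \<alpha> * F j + G j) i = \<alpha> * D2 x F i + D2 x G i"
proof -
  have "Dplus x (\<lambda>j. \<alpha> * F j + G j) i - Dminus x (\<lambda>j. \<alpha> * F j + G j) i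
     = \<alpha> * (Dplus x F i - Dminus x F i) + (Dplus x G i - Dminus x G i)"
    by (simp only: Dplus_lin Dminus_lin) (simp add: algebra_simps)
  then show ?thesis unfolding D2_def by (simp only: div_lin_aux)
qed

lemma LN_lin: "LN eps b c x (\<lambda>j. \<alpha> * F j + G j) i = \<alpha> * LN eps b c x F i + LN eps b c x G i"
  unfolding LN_def Let_def D2_lin Dplus_lin by (simp add: algebra_simps)

lemma LN_diff: "LN eps b c x (\<lambda>j. F j - G j) i = LN eps b c x F i - LN eps b c x G i"
  using LN_lin[of eps b c x "-1" G F i] by (simp add: algebra_simps)

lemma LN_const: "LN eps b c x (\<lambda>j. K) i = c (x i) * K"
  unfolding LN_def D2_def Dplus_def Dminus_def Let_def by simp

lemma LN_neg:
  assumes eps: "eps > 0" and hm: "step x i > 0" and hp: "step x (i+1) > 0"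
    and bi: "b (x i) > 0" and ci: "c (x i) \<ge> 0"
    and up: "\<Phi> (i+1) > \<Phi> i" and dn: "\<Phi> (i-1) \<ge> \<Phi> i" and neg: "\<Phi> i < 0"
  shows "LN eps b c x \<Phi> i < 0"
proof -
  define \<rho> where "\<rho> = b (x i) * step x (i + 1) / (2 * eps)"
  have rp: "\<rho> > 0" using bi hp eps by (simp add: \<rho>_def)
  have sp: "sigma \<rho> > 0" by (rule sigma_pos[OF rp])
  have Dp: "Dplus x \<Phi> i > 0" unfolding Dplus_def using up hp by simp
  have Dm: "Dminus x \<Phi> i \<le> 0" unfolding Dminus_def using dn hm by (simp add: divide_nonpos_pos)
  have D2: "D2 x \<Phi> i > 0" unfolding D2_def using Dp Dm hm hp by (intro divide_pos_pos) auto
  have "eps * sigma \<rho> * D2 x \<Phi> i > 0" using eps sp D2 by simp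
  moreover have "b (x i) * Dplus x \<Phi> i > 0" using bi Dp by simp
  moreover have "c (x i) * \<Phi> i \<le> 0" using ci neg by (simp add: mult_nonneg_nonpos)
  ultimately show ?thesis unfolding LN_def Let_def \<rho>_def[symmetric] by simp
qed

lemma dmp:
  fixes x \<Phi> :: "nat \<Rightarrow> real"
  assumes lr: "l < r" and Pl: "\<Phi> l \<ge> 0" and Pr: "\<Phi> r \<ge> 0" and eps: "eps > 0"
    and steps: "\<And>i. l < i \<Longrightarrow> i \<le> r \<Longrightarrow> step x i > 0"
    and bpos: "\<And>i. l < i \<Longrightarrow> i < r \<Longrightarrow> b (x i) > 0"
    and cnn: "\<And>i. l < i \<Longrightarrow> i < r \<Longrightarrow> c (x i) \<ge> 0"
    and L: "\<And>i. l < i \<Longrightarrow> i < r \<Longrightarrow> LN eps b c x \<Phi> i \<ge> 0"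
  shows "\<forall>i\<in>{l..r}. \<Phi> i \<ge> 0"
proof (rule ccontr)
  assume "\<not> (\<forall>i\<in>{l..r}. \<Phi> i \<ge> 0)"
  then obtain j where j: "j \<in> {l..r}" "\<Phi> j < 0" by force
  define m where "m = Min (\<Phi> ` {l..r})"
  have mle: "m \<le> \<Phi> k" if "k \<in> {l..r}" for k unfolding m_def using that by simp
  have min_in: "m \<in> \<Phi> ` {l..r}" unfolding m_def using lr by (intro Min_in) auto
  have mneg: "m < 0" using mle[OF j(1)] j(2) by simp
  define S where "S = {k \<in> {l..r}. \<Phi> k = m}"
  have Sne: "S \<noteq> {}" using min_in unfolding S_def by auto
  have Sfin: "finite S" unfolding S_def by simp
  define i where "i = Max S"
  have iS: "i \<in> S" unfolding i_def by (rule Max_in[OF Sfin Sne])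
  then have i1: "i \<in> {l..r}" and i2: "\<Phi> i = m" unfolding S_def by auto
  have il: "i \<noteq> l" using i2 Pl mneg by auto
  have ir: "i \<noteq> r" using i2 Pr mneg by auto
  have il': "l < i" and ir': "i < r" using i1 il ir by auto
  have up: "\<Phi> (i+1) > \<Phi> i"
  proof -
    have in1: "i + 1 \<in> {l..r}" using il' ir' by auto
    have "i + 1 \<notin> S" using Max_ge[OF Sfin, of "i+1"] unfolding i_def[symmetric] by auto
    then have "\<Phi> (i+1) \<noteq> m" using in1 unfolding S_def by auto
    then show ?thesis using mle[OF in1] i2 by simp
  qed
  have "i - 1 \<in> {l..r}" using il' ir' by auto
  then have dn: "\<Phi> (i-1) \<ge> \<Phi> i" using mle[of "i-1"] i2 by auto
  have "LN eps b c x \<Phi> i < 0"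
    by (rule LN_neg[OF eps _ _ _ _ up dn]) (use il' ir' i2 mneg steps[of "i+1"] steps[of i] bpos[of i] cnn[of i] in auto)
  then show False using L[OF il' ir'] by simp
qed

locale mesh =
  fixes a eps beta Q :: real and N Jn :: nat
  assumes eps_pos: "eps > 0" and beta_pos: "beta > 0" and a_pos: "a > 0"
    and Q_pos: "0 < Q" and Q_lt1: "Q < 1" and Jn_def: "real Jn = Q * real N"
    and N_pos: "0 < N" and xi_le: "trans_pt a eps beta (real N) \<le> Q"
begin

definition "xi = trans_pt a eps beta (real N)"
definition "h = xi / real Jn"
definition "H = (1 - xi) / (real N - real Jn)"
definition "x = shishkin_mesh (real N) a eps beta Q N"
definition "k = h / eps"

lemma Jn_pos: "0 < Jn"
proof -
  have "0 < Q * real N" using Q_pos N_pos by simp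
  then show ?thesis using Jn_def by simp
qed

lemma Jn_lt: "Jn < N"
proof -
  have "Q * real N < real N" using Q_lt1 N_pos by simp
  then show ?thesis using Jn_def by simp
qed

lemma N_ge2: "N \<ge> 2" using Jn_pos Jn_lt by simp

lemma lnN_pos: "ln (real N) > 0" using N_ge2 by simp

lemma xi_pos: "xi > 0"
  unfolding xi_def trans_pt_def using a_pos eps_pos beta_pos lnN_pos by simp

lemma xi_leQ: "xi \<le> Q" using xi_le xi_def by simp

lemma h_pos: "h > 0" unfolding h_def using xi_pos Jn_pos by simp

lemma H_pos: "H > 0" unfolding H_def using xi_leQ Q_lt1 Jn_lt by simp

lemma h_le: "h \<le> 1 / real N"
proof -
  have "h = xi / (Q * real N)" unfolding h_def Jn_def ..
  also have "\<dots> \<le> Q / (Q * real N)" using xi_leQ Q_pos N_pos by (intro divide_right_mono) auto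
  also have "\<dots> = 1 / real N" using Q_pos by simp
  finally show ?thesis .
qed

lemma H_ge: "1 / real N \<le> H"
proof -
  have "real N - real Jn = (1 - Q) * real N" using Jn_def by (simp add: algebra_simps)
  then have "H = (1 - xi) / ((1 - Q) * real N)" unfolding H_def by simp
  moreover have "(1 - Q) / ((1 - Q) * real N) \<le> (1 - xi) / ((1 - Q) * real N)"
    using xi_leQ Q_lt1 N_pos by (intro divide_right_mono) auto
  ultimately show ?thesis using Q_lt1 by simp
qed

lemma h_le_H: "h \<le> H" using h_le H_ge by simp

lemma x_fine: "i \<le> Jn \<Longrightarrow> x i = real i * h"
  unfolding x_def shishkin_mesh_def Let_def h_def xi_def Jn_def[symmetric] by simp

lemma x_coarse: "Jn \<le> i \<Longrightarrow> x i = xi + (real i - real Jn) * H"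
proof -
  assume i: "Jn \<le> i"
  show ?thesis
  proof (cases "i = Jn")
    case True
    then show ?thesis using x_fine[of i] Jn_pos unfolding h_def by simp
  next
    case False
    then have "\<not> real i \<le> real Jn" using i by simp
    then show ?thesis
      unfolding x_def shishkin_mesh_def Let_def H_def xi_def Jn_def[symmetric] by simp
  qed
qed

lemma xi_eq: "xi = real Jn * h" unfolding h_def using Jn_pos by simp

lemma x0: "x 0 = 0" using x_fine[of 0] by simp

lemma xN: "x N = 1"
proof -
  have "x N = xi + (real N - real Jn) * H" using x_coarse Jn_lt by simp
  also have "\<dots> = 1" unfolding H_def using Jn_lt by simp
  finally show ?thesis .
qed

lemma step_fine: "1 \<le> i \<Longrightarrow> i \<le> Jn \<Longrightarrow> step x i = h"
  unfolding step_def using x_fine[of i] x_fine[of "i-1"] by (simp add: of_nat_diff algebra_simps)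

lemma step_coarse: "Jn < i \<Longrightarrow> step x i = H"
proof -
  assume i: "Jn < i"
  then have "Jn \<le> i - 1" by simp
  then show ?thesis
    unfolding step_def using x_coarse[of i] x_coarse[of "i-1"] i by (simp add: of_nat_diff algebra_simps)
qed

lemma step_pos: "1 \<le> i \<Longrightarrow> step x i > 0"
  using step_fine step_coarse h_pos H_pos by (cases "i \<le> Jn") auto

lemma x_mono: "i \<le> j \<Longrightarrow> x i \<le> x j"
proof (induction j)
  case 0 then show ?case by simp
next
  case (Suc j)
  then show ?case
  proof (cases "i = Suc j")
    case False
    then have "x i \<le> x j" using Suc by simp
    moreover have "step x (Suc j) > 0" by (rule step_pos) simp
    ultimately show ?thesis unfolding step_def by simp
  qed simp
qed

lemma x_strict: "i < j \<Longrightarrow> x i < x j"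
proof -
  assume "i < j"
  then have "x i \<le> x (j - 1)" by (intro x_mono) simp
  moreover have "step x j > 0" using \<open>i < j\<close> by (intro step_pos) simp
  ultimately show ?thesis unfolding step_def by simp
qed

lemma x_in01: "i \<le> N \<Longrightarrow> 0 \<le> x i \<and> x i \<le> 1"
  using x_mono[of 0 i] x_mono[of i N] x0 xN by simp

lemma x_interior: "0 < i \<Longrightarrow> i < N \<Longrightarrow> 0 < x i \<and> x i < 1"
  using x_strict[of 0 i] x_strict[of i N] x0 xN by simp

lemma exp_xi: "exp (- beta * xi / eps) = real N powr (- a)"
proof -
  have "- beta * xi / eps = - a * ln (real N)"
    unfolding xi_def trans_pt_def using beta_pos eps_pos by (simp add: field_simps)
  then show ?thesis using N_pos by (simp add: powr_def)
qed

lemma k_eq: "k = a * ln (real N) / (beta * Q * real N)"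
  unfolding k_def h_def xi_def trans_pt_def Jn_def using eps_pos by (simp add: field_simps)

lemma k_pos: "k > 0" unfolding k_def using h_pos eps_pos by simp

lemma k_le: "k \<le> a / (beta * Q)"
proof -
  have "ln (real N) \<le> real N" using ln_le_minus_one[of "real N"] N_pos by simp
  then have "a * ln (real N) / (beta * Q * real N) \<le> a * real N / (beta * Q * real N)"
    using a_pos beta_pos Q_pos N_pos by (intro divide_right_mono mult_left_mono) auto
  then show ?thesis using k_eq N_pos by simp
qed

lemma eps_k2: "eps * k\<^sup>2 = (a / (beta * Q))\<^sup>2 * (eps * real N powr (-2) * (ln (real N))\<^sup>2)"
proof -
  have "real N powr (-2) = 1 / (real N)\<^sup>2" using N_pos by (simp add: powr_minus powr_numeral divide_inverse)
  then show ?thesis unfolding k_eq using N_pos Q_pos beta_pos by (simp add: field_simps power2_eq_square)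
qed

end

lemma LN_unfold:
  "LN eps b c x \<Phi> i =
     - eps * sigma (b (x i) * step x (i+1) / (2 * eps)) *
       (((\<Phi> (i+1) - \<Phi> i) / step x (i+1) - (\<Phi> i - \<Phi> (i-1)) / step x i) / ((step x i + step x (i+1)) / 2))
     - b (x i) * ((\<Phi> (i+1) - \<Phi> i) / step x (i+1)) + c (x i) * \<Phi> i"
  unfolding LN_def Let_def D2_def Dplus_def Dminus_def by simp

lemma eps_sigma:
  assumes "eps > 0" "bi > 0" "s > 0"
  shows "eps * sigma (bi * s / (2 * eps)) = bi * s / (exp (bi * s / eps) - 1)"
proof -
  have "bi * s / (2 * eps) \<noteq> 0" using assms by simp
  moreover have "2 * (bi * s / (2 * eps)) = bi * s / eps" using assms by simp
  ultimately show ?thesis unfolding sigma_def using assms by (simp add: field_simps)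
qed

lemma exp_barrier_uniform:
  assumes eps: "eps > 0" and beta: "beta > 0" and bi: "b (x i) \<ge> beta" and ci: "c (x i) \<ge> 0"
    and s: "s > 0" and s1: "step x i = s" and s2: "step x (i+1) = s"
    and xp: "x (i+1) = x i + s" and xm: "x (i-1) = x i - s"
  shows "LN eps b c x (\<lambda>j. exp (- beta * x j / eps)) i \<ge> 0"
proof -
  define W where "W = exp (- beta * x i / eps)"
  define X where "X = exp (beta * s / eps)"
  define Y where "Y = exp (b (x i) * s / eps)"
  have W: "W > 0" unfolding W_def by simp
  have X1: "X > 1" unfolding X_def using beta s eps by (simp add: one_less_exp_iff)
  have XY: "X \<le> Y" unfolding X_def Y_def using bi s eps by (auto intro!: divide_right_mono mult_right_mono)
  have bpos: "b (x i) > 0" using bi beta by simp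
  have wp: "exp (- beta * x (i+1) / eps) = W / X"
  proof -
    have "- beta * x (i+1) / eps = (- beta * x i / eps) - beta * s / eps" unfolding xp using eps by (simp add: field_simps)
    then show ?thesis unfolding W_def X_def by (simp add: exp_diff)
  qed
  have wm: "exp (- beta * x (i-1) / eps) = W * X"
  proof -
    have "- beta * x (i-1) / eps = (- beta * x i / eps) + beta * s / eps" unfolding xm using eps by (simp add: field_simps)
    then show ?thesis unfolding W_def X_def by (simp only: exp_add mult.commute)
  qed
  have es: "eps * sigma (b (x i) * s / (2 * eps)) = b (x i) * s / (Y - 1)"
    unfolding Y_def by (rule eps_sigma[OF eps bpos s])
  have "LN eps b c x (\<lambda>j. exp (- beta * x j / eps)) i =
      - (b (x i) * s / (Y - 1)) * (((W / X - W) / s - (W - W * X) / s) / s)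
      - b (x i) * ((W / X - W) / s) + c (x i) * W"
    unfolding LN_unfold s1 s2 wp wm W_def[symmetric] es[symmetric] by (simp add: mult.assoc)
  also have "\<dots> = W * (b (x i) * (X - 1) / (X * s) * ((Y - X) / (Y - 1))) + c (x i) * W"
    using X1 XY s by (simp add: field_simps) (simp add: algebra_simps power2_eq_square)?
  also have "\<dots> \<ge> 0"
    using W X1 XY s bpos ci by (intro add_nonneg_nonneg mult_nonneg_nonneg divide_nonneg_pos) auto
  finally show ?thesis .
qed

lemma exp_barrier_trans:
  assumes eps: "eps > 0" and beta: "beta > 0" and bi: "b (x i) \<ge> beta" and ci: "c (x i) \<ge> 0"
    and h: "h > 0" and hH: "h \<le> H" and s1: "step x i = h" and s2: "step x (i+1) = H"
    and xp: "x (i+1) = x i + H" and xm: "x (i-1) = x i - h"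
  shows "LN eps b c x (\<lambda>j. exp (- beta * x j / eps)) i \<ge> 0"
proof -
  have H: "H > 0" using h hH by simp
  define W where "W = exp (- beta * x i / eps)"
  define y where "y = beta * H / eps"
  define z where "z = beta * h / eps"
  define Xh where "Xh = exp z"
  define XH where "XH = exp y"
  define Y where "Y = exp (b (x i) * H / eps)"
  have W: "W > 0" unfolding W_def by simp
  have z: "z > 0" unfolding z_def using beta h eps by simp
  have zy: "z \<le> y" unfolding z_def y_def using beta hH eps by (auto intro!: divide_right_mono)
  have XH1: "XH > 1" unfolding XH_def using z zy by (simp add: one_less_exp_iff)
  have Xh1: "Xh > 1" unfolding Xh_def using z by (simp add: one_less_exp_iff)
  have XY: "XH \<le> Y" unfolding XH_def Y_def y_def using bi H eps by (auto intro!: divide_right_mono mult_right_mono)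
  have bpos: "b (x i) > 0" using bi beta by simp
  have wp: "exp (- beta * x (i+1) / eps) = W / XH"
  proof -
    have "- beta * x (i+1) / eps = (- beta * x i / eps) - y" unfolding xp y_def using eps by (simp add: field_simps)
    then show ?thesis unfolding W_def XH_def by (simp add: exp_diff)
  qed
  have wm: "exp (- beta * x (i-1) / eps) = W * Xh"
  proof -
    have "- beta * x (i-1) / eps = (- beta * x i / eps) + z" unfolding xm z_def using eps by (simp add: field_simps)
    then show ?thesis unfolding W_def Xh_def by (simp only: exp_add mult.commute)
  qed
  have es: "eps * sigma (b (x i) * H / (2 * eps)) = b (x i) * H / (Y - 1)"
    unfolding Y_def by (rule eps_sigma[OF eps bpos H])
  define D where "D = (Xh - 1) / h - (1 - 1 / XH) / H"
  have "LN eps b c x (\<lambda>j. exp (- beta * x j / eps)) i =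
      - (b (x i) * H / (Y - 1)) * (((W / XH - W) / H - (W - W * Xh) / h) / ((h + H) / 2))
      - b (x i) * ((W / XH - W) / H) + c (x i) * W"
    unfolding LN_unfold s1 s2 wp wm W_def[symmetric] es[symmetric] by (simp add: mult.assoc)
  also have "\<dots> = W * (b (x i) * (1 - 1 / XH) / H - 2 * (b (x i) * H / (Y - 1)) * D / (h + H)) + c (x i) * W"
    unfolding D_def using XH1 h H by (simp add: field_simps)
  also have "\<dots> \<ge> 0"
  proof -
    have "2 * (b (x i) * H / (Y - 1)) * D / (h + H) \<le> b (x i) * (1 - 1 / XH) / H"
    proof (cases "D \<le> 0")
      case True
      then have "2 * (b (x i) * H / (Y - 1)) * D / (h + H) \<le> 0"
        using bpos H h XY XH1 by (intro divide_nonpos_pos mult_nonneg_nonpos) auto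
      also have "0 \<le> b (x i) * (1 - 1 / XH) / H" using bpos H XH1 by simp
      finally show ?thesis .
    next
      case False
      then have D: "D > 0" by simp
      have "2 * (b (x i) * H / (Y - 1)) * D / (h + H) \<le> 2 * (b (x i) * H / (XH - 1)) * D / (h + H)"
        using D XY XH1 bpos H h by (intro divide_right_mono mult_right_mono mult_left_mono divide_left_mono) auto
      also have "\<dots> \<le> b (x i) * (1 - 1 / XH) / H"
      proof -
        have ti: "2 * y\<^sup>2 * ((exp z - 1) / z) \<le> (exp y - 2 + exp (-y)) * (z + y) + 2 * y * (1 - exp (-y))"
          by (rule trans_ineq[OF z zy])
        have hz: "h = eps * z / beta" unfolding z_def using beta eps by simp
        have hy: "H = eps * y / beta" unfolding y_def using beta eps by simp
        have emy: "exp (-y) = 1 / XH" unfolding XH_def by (simp add: exp_minus field_simps)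
        have e1: "2 * H\<^sup>2 * D = (eps / beta) * (2 * y\<^sup>2 * ((exp z - 1) / z) - 2 * y * (1 - exp (-y)))"
          unfolding D_def emy Xh_def[symmetric] hz hy using z zy beta eps
          by (simp add: field_simps power2_eq_square)
        have e2: "(1 - 1 / XH) * (XH - 1) * (h + H) = (eps / beta) * ((exp y - 2 + exp (-y)) * (z + y))"
          unfolding emy XH_def[symmetric] hz hy using XH1 beta eps z by (simp add: field_simps)
        have key: "2 * H\<^sup>2 * D \<le> (1 - 1 / XH) * (XH - 1) * (h + H)"
          unfolding e1 e2 using ti beta eps by (intro mult_left_mono) auto
        show ?thesis
        proof -
          have "2 * (b (x i) * H / (XH - 1)) * D / (h + H) = b (x i) * (2 * H\<^sup>2 * D) / ((XH - 1) * (h + H) * H)"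
          proof -
            define A where "A = XH - 1"
            define B where "B = h + H"
            have "A \<noteq> 0" "B \<noteq> 0" "H \<noteq> 0" using XH1 H h by (auto simp: A_def B_def)
            then have "2 * (b (x i) * H / A) * D / B = b (x i) * (2 * H\<^sup>2 * D) / (A * B * H)"
              by (simp add: field_simps power2_eq_square)
            then show ?thesis unfolding A_def B_def .
          qed
          also have "\<dots> \<le> b (x i) * ((1 - 1 / XH) * (XH - 1) * (h + H)) / ((XH - 1) * (h + H) * H)"
            using key bpos XH1 H h by (intro divide_right_mono mult_left_mono) auto
          also have "\<dots> = b (x i) * (1 - 1 / XH) / H"
          proof -
            define A where "A = XH - 1"
            define B where "B = h + H"
            have "A \<noteq> 0" "B \<noteq> 0" "H \<noteq> 0" using XH1 H h by (auto simp: A_def B_def)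
            then have "b (x i) * ((1 - 1 / XH) * A * B) / (A * B * H) = b (x i) * (1 - 1 / XH) / H"
              by (simp add: field_simps)
            then show ?thesis unfolding A_def B_def .
          qed
          finally show ?thesis .
        qed
      qed
      finally show ?thesis .
    qed
    then have "0 \<le> W * (b (x i) * (1 - 1 / XH) / H - 2 * (b (x i) * H / (Y - 1)) * D / (h + H))"
      using W by (intro mult_nonneg_nonneg) auto
    moreover have "0 \<le> c (x i) * W" using W ci by simp
    ultimately show ?thesis by linarith
  qed
  finally show ?thesis .
qed

lemma fine_barrier:
  assumes eps: "eps > 0" and beta: "beta > 0" and bi: "b (x i) \<ge> beta" and ci: "c (x i) \<ge> 0"
    and h: "h > 0" and s1: "step x i = h" and s2: "step x (i+1) = h" and i: "1 \<le> i"
    and r_def: "r = 1 + (beta / 2) * (h / eps)"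
  shows "LN eps b c x (\<lambda>j. inverse r ^ j) i \<ge> beta\<^sup>2 / (4 * eps) * inverse r ^ (i+1)"
proof -
  define g where "g = beta / 2"
  have g: "g > 0" "g \<le> beta / 2" unfolding g_def using beta by auto
  have r1: "r > 1" unfolding r_def using beta h eps by simp
  define P where "P = inverse r ^ (i+1)"
  have P: "P > 0" unfolding P_def using r1 by simp
  have Pi: "inverse r ^ i = P * r" unfolding P_def using r1 by (simp add: field_simps)
  have Pm: "inverse r ^ (i-1) = P * r * r" using i r1 unfolding P_def
    by (cases i) (auto simp: field_simps)
  have sp: "sigma (b (x i) * h / (2 * eps)) \<le> 1" using bi beta h eps by (intro sigma_le1) auto
  have sn: "sigma (b (x i) * h / (2 * eps)) > 0" using bi beta h eps by (intro sigma_pos) auto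
  define S where "S = sigma (b (x i) * h / (2 * eps))"
  have rm1: "r - 1 = g * h / eps" unfolding r_def g_def by simp
  have "LN eps b c x (\<lambda>j. inverse r ^ j) i =
      - eps * S * (((P - P * r) / h - (P * r - P * r * r) / h) / ((h + h) / 2))
      - b (x i) * ((P - P * r) / h) + c (x i) * (P * r)"
    unfolding LN_unfold s1 s2 Pi Pm S_def by (simp add: P_def)
  also have "\<dots> = P * (g / eps) * (b (x i) - S * g) + c (x i) * (P * r)"
    using h eps rm1 unfolding rm1 by (simp add: field_simps power2_eq_square) (simp add: r_def g_def field_simps)?
  also have "\<dots> \<ge> P * (g / eps) * (beta - g)"
  proof -
    have "S * g \<le> g" using sp g unfolding S_def by (simp add: mult_left_le_one_le)
    then have "beta - g \<le> b (x i) - S * g" using bi by simp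
    then have "P * (g / eps) * (beta - g) \<le> P * (g / eps) * (b (x i) - S * g)"
      using P g eps by (intro mult_left_mono) auto
    moreover have "0 \<le> c (x i) * (P * r)" using ci P r1 by simp
    ultimately show ?thesis by linarith
  qed
  finally show ?thesis unfolding g_def P_def by (simp add: power2_eq_square field_simps)
qed

lemma deriv_bound_seg:
  fixes f f' :: "real \<Rightarrow> real"
  assumes der: "\<And>x. min s t \<le> x \<Longrightarrow> x \<le> max s t \<Longrightarrow> (f has_real_derivative f' x) (at x)"
    and bd: "\<And>x. min s t \<le> x \<Longrightarrow> x \<le> max s t \<Longrightarrow> \<bar>f' x\<bar> \<le> K"
  shows "\<bar>f t - f s\<bar> \<le> K * \<bar>t - s\<bar>"
proof -
  have cont: "continuous_on {min s t..max s t} f"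
  proof (rule continuous_at_imp_continuous_on, rule ballI)
    fix x assume "x \<in> {min s t..max s t}"
    then show "isCont f x" using DERIV_continuous[OF der] by auto
  qed
  show ?thesis
    by (rule deriv_bound_pts[OF _ _ _ _ cont, of s t f' K]) (use der bd in auto)
qed

locale cprob =
  fixes b c b1 b2 c1 c2 :: "real \<Rightarrow> real" and beta p eps Bm Bp Bpp Cm Cp Cpp :: real
    and v v1 v2 :: "real \<Rightarrow> real"
  assumes beta_pos: "beta > 0" and eps_pos: "eps > 0" and eps_lt1: "eps < 1"
    and b_gt: "\<And>x. 0 \<le> x \<Longrightarrow> x \<le> 1 \<Longrightarrow> b x > beta"
    and c_nn: "\<And>x. 0 \<le> x \<Longrightarrow> x \<le> 1 \<Longrightarrow> c x \<ge> 0"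
    and b_bd: "\<And>x. 0 \<le> x \<Longrightarrow> x \<le> 1 \<Longrightarrow> \<bar>b x\<bar> \<le> Bm"
    and b1_bd: "\<And>x. 0 \<le> x \<Longrightarrow> x \<le> 1 \<Longrightarrow> \<bar>b1 x\<bar> \<le> Bp"
    and b2_bd: "\<And>x. 0 \<le> x \<Longrightarrow> x \<le> 1 \<Longrightarrow> \<bar>b2 x\<bar> \<le> Bpp"
    and c_bd: "\<And>x. 0 \<le> x \<Longrightarrow> x \<le> 1 \<Longrightarrow> \<bar>c x\<bar> \<le> Cm"
    and c1_bd: "\<And>x. 0 \<le> x \<Longrightarrow> x \<le> 1 \<Longrightarrow> \<bar>c1 x\<bar> \<le> Cp"
    and c2_bd: "\<And>x. 0 \<le> x \<Longrightarrow> x \<le> 1 \<Longrightarrow> \<bar>c2 x\<bar> \<le> Cpp"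
    and b_der: "\<And>x. 0 < x \<Longrightarrow> x < 1 \<Longrightarrow> (b has_real_derivative b1 x) (at x)"
    and b1_der: "\<And>x. 0 < x \<Longrightarrow> x < 1 \<Longrightarrow> (b1 has_real_derivative b2 x) (at x)"
    and c_der: "\<And>x. 0 < x \<Longrightarrow> x < 1 \<Longrightarrow> (c has_real_derivative c1 x) (at x)"
    and c1_der: "\<And>x. 0 < x \<Longrightarrow> x < 1 \<Longrightarrow> (c1 has_real_derivative c2 x) (at x)"
    and v_cont: "continuous_on {0..1} v" and v0: "v 0 = p" and v1e: "v 1 = 0"
    and v_der: "\<And>x. 0 < x \<Longrightarrow> x < 1 \<Longrightarrow> (v has_real_derivative v1 x) (at x)"
    and v1_der: "\<And>x. 0 < x \<Longrightarrow> x < 1 \<Longrightarrow> (v1 has_real_derivative v2 x) (at x)"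
    and ode: "\<And>x. 0 < x \<Longrightarrow> x < 1 \<Longrightarrow> eps * v2 x + b x * v1 x - c x * v x = 0"
begin

definition "W t = \<bar>p\<bar> * exp (- beta * t / eps)"

lemma W_nonneg: "W t \<ge> 0" unfolding W_def by simp

lemma W_mono: "s \<le> t \<Longrightarrow> W t \<le> W s"
  unfolding W_def using beta_pos eps_pos
  by (auto intro!: mult_left_mono divide_right_mono mult_left_mono)

lemma W_shift: "W (t - d) = exp (beta * d / eps) * W t"
proof -
  have "- beta * (t - d) / eps = beta * d / eps + (- beta * t / eps)" using eps_pos by (simp add: field_simps)
  then have "exp (- beta * (t - d) / eps) = exp (beta * d / eps) * exp (- beta * t / eps)"
    by (simp only: exp_add)
  then show ?thesis unfolding W_def by simp
qed

lemma max_princ_aux: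
  assumes del: "\<delta> > 0" and sg: "s = 1 \<or> s = -1" and x: "0 \<le> x" "x \<le> 1"
  shows "s * v x \<le> (\<bar>p\<bar> + \<delta>) * exp (- beta * x / eps)"
proof (rule ccontr)
  assume neg: "\<not> ?thesis"
  define E where "E t = exp (- beta * t / eps)" for t
  define w where "w t = (\<bar>p\<bar> + \<delta>) * E t - s * v t" for t
  have wcont: "continuous_on {0..1} w"
    unfolding w_def E_def using eps_pos by (intro continuous_intros v_cont) auto
  obtain x0 where x0: "x0 \<in> {0..1}" and xmin: "\<And>y. y \<in> {0..1} \<Longrightarrow> w x0 \<le> w y"
    using continuous_attains_inf[OF compact_Icc _ wcont] by auto
  have wx: "w x < 0" using neg unfolding w_def E_def by simp
  have w0neg: "w x0 < 0" using xmin[of x] x wx by simp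
  have "w 0 > 0" unfolding w_def E_def using v0 del sg by (auto simp: abs_if)
  then have x00: "x0 \<noteq> 0" using w0neg by auto
  have "w 1 > 0" unfolding w_def E_def using v1e del by simp
  then have x01: "x0 \<noteq> 1" using w0neg by auto
  have xi: "0 < x0" "x0 < 1" using x0 x00 x01 by auto
  define w1 where "w1 t = (\<bar>p\<bar> + \<delta>) * (- beta / eps * E t) - s * v1 t" for t
  define w2 where "w2 t = (\<bar>p\<bar> + \<delta>) * ((beta / eps)\<^sup>2 * E t) - s * v2 t" for t
  have dw: "(w has_real_derivative w1 t) (at t)" if "0 < t" "t < 1" for t
    unfolding w_def w1_def E_def
    using eps_pos by (auto intro!: derivative_eq_intros v_der that simp: field_simps)
  have dw1: "(w1 has_real_derivative w2 t) (at t)" if "0 < t" "t < 1" for t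
    unfolding w1_def w2_def E_def
    using eps_pos by (auto intro!: derivative_eq_intros v1_der that simp: field_simps power2_eq_square)
  have w1z: "w1 x0 = 0"
  proof (rule DERIV_local_min[OF dw[OF xi]])
    show "0 < min x0 (1 - x0)" using xi by simp
    show "\<forall>y. \<bar>x0 - y\<bar> < min x0 (1 - x0) \<longrightarrow> w x0 \<le> w y"
    proof (intro allI impI)
      fix y assume "\<bar>x0 - y\<bar> < min x0 (1 - x0)"
      then have "y \<in> {0..1}" by (auto simp: abs_if split: if_splits)
      then show "w x0 \<le> w y" by (rule xmin)
    qed
  qed
  have w2n: "w2 x0 < 0"
  proof -
    have bx: "b x0 > beta" using b_gt xi by simp
    have cx: "c x0 \<ge> 0" using c_nn xi by simp
    have od: "eps * v2 x0 = c x0 * v x0 - b x0 * v1 x0" using ode[OF xi] by simp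
    have sv1: "s * v1 x0 = (\<bar>p\<bar> + \<delta>) * (- beta / eps * E x0)" using w1z unfolding w1_def by simp
    have sv: "s * v x0 = (\<bar>p\<bar> + \<delta>) * E x0 - w x0" unfolding w_def by simp
    have ss: "s * s = 1" using sg by auto
    have "eps * w2 x0 = (\<bar>p\<bar> + \<delta>) * (beta\<^sup>2 / eps * E x0) - s * (c x0 * v x0 - b x0 * v1 x0)"
      unfolding w2_def using eps_pos od[symmetric] by (simp add: field_simps power2_eq_square)
    also have "\<dots> = (\<bar>p\<bar> + \<delta>) * (beta\<^sup>2 / eps * E x0) - c x0 * (s * v x0) + b x0 * (s * v1 x0)"
      by (simp add: algebra_simps)
    also have "\<dots> = (\<bar>p\<bar> + \<delta>) * E x0 * (beta / eps * (beta - b x0) - c x0) + c x0 * w x0"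
      unfolding sv sv1 using eps_pos by (simp add: field_simps power2_eq_square)
    also have "\<dots> < 0"
    proof -
      have "beta / eps * (beta - b x0) < 0" using bx beta_pos eps_pos by (intro mult_pos_neg) auto
      then have "beta / eps * (beta - b x0) - c x0 < 0" using cx by simp
      moreover have "(\<bar>p\<bar> + \<delta>) * E x0 > 0" using del unfolding E_def by simp
      ultimately have "(\<bar>p\<bar> + \<delta>) * E x0 * (beta / eps * (beta - b x0) - c x0) < 0"
        by (simp add: mult_pos_neg)
      moreover have "c x0 * w x0 \<le> 0" using cx w0neg by (simp add: mult_nonneg_nonpos)
      ultimately show ?thesis by simp
    qed
    finally show ?thesis using eps_pos by (simp add: mult_less_0_iff)
  qed
  obtain d where d: "d > 0" and dd: "\<And>h. h > 0 \<Longrightarrow> h < d \<Longrightarrow> w1 (x0 + h) < w1 x0"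
    using DERIV_neg_dec_right[OF dw1[OF xi] w2n] by blast
  define t where "t = x0 + min d (1 - x0) / 2"
  have t: "x0 < t" "t < 1" "t - x0 < d" unfolding t_def using d xi by (auto simp: min_def field_simps)
  obtain z where z: "x0 < z" "z < t" "w t - w x0 = (t - x0) * w1 z"
    using MVT2[OF t(1), of w w1] dw xi t by force
  have "w1 z < 0" using dd[of "z - x0"] z t w1z by simp
  then have "(t - x0) * w1 z < 0" using z by (intro mult_pos_neg) auto
  then have "w t < w x0" using z by simp
  moreover have "w x0 \<le> w t" using xmin t xi by simp
  ultimately show False by simp
qed

lemma v_bound: "0 \<le> x \<Longrightarrow> x \<le> 1 \<Longrightarrow> \<bar>v x\<bar> \<le> W x"
proof -
  assume x: "0 \<le> x" "x \<le> 1"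
  define E where "E = exp (- beta * x / eps)"
  have E: "E > 0" unfolding E_def by simp
  have "s * v x \<le> \<bar>p\<bar> * E" if sg: "s = 1 \<or> s = -1" for s
  proof (rule field_le_epsilon)
    fix e :: real assume e: "e > 0"
    have "s * v x \<le> (\<bar>p\<bar> + e / E) * E" unfolding E_def
      by (rule max_princ_aux[OF _ sg x]) (use e E in simp)
    also have "\<dots> = \<bar>p\<bar> * E + e" using E by (simp add: field_simps)
    finally show "s * v x \<le> \<bar>p\<bar> * E + e" .
  qed
  from this[of 1] this[of "-1"] show ?thesis unfolding W_def E_def[symmetric] by auto
qed

end

context cprob
begin

lemma consts_nonneg: "Bm \<ge> 0" "Bp \<ge> 0" "Bpp \<ge> 0" "Cm \<ge> 0" "Cp \<ge> 0" "Cpp \<ge> 0"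
  using b_bd[of 0] b1_bd[of 0] b2_bd[of 0] c_bd[of 0] c1_bd[of 0] c2_bd[of 0] by auto

lemma mvt_v:
  assumes "0 \<le> lo" "lo < hi" "hi \<le> 1"
  shows "\<exists>z. lo < z \<and> z < hi \<and> v hi - v lo = (hi - lo) * v1 z"
proof -
  have cont: "continuous_on {lo..hi} v" by (rule continuous_on_subset[OF v_cont]) (use assms in auto)
  obtain l z where z: "lo < z" "z < hi" "DERIV v z :> l" "v hi - v lo = (hi - lo) * l"
  proof -
    have "\<And>x. lo < x \<Longrightarrow> x < hi \<Longrightarrow> v differentiable (at x)"
      using v_der assms real_differentiable_def by (meson le_less_trans less_le_trans)
    from MVT[OF assms(2) cont this] show ?thesis using that by blast
  qed
  have "l = v1 z" using DERIV_unique[OF z(3) v_der] z assms by simp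
  then show ?thesis using z by blast
qed

definition "K1 = exp (beta / 2) * (4 + 2 * Bm + Cm + Bp)"

lemma v1_bound:
  assumes x: "0 < x" "x < 1"
  shows "\<bar>v1 x\<bar> \<le> K1 * W x / eps"
proof -
  define d where "d = eps / 2"
  have d: "d > 0" "d < 1/2" using eps_pos eps_lt1 by (auto simp: d_def)
  define e where "e = exp (beta / 2)"
  have e1: "e \<ge> 1" unfolding e_def using beta_pos by simp
  have Wsh: "W (x - d) = e * W x" using W_shift[of x d] unfolding e_def d_def using eps_pos by simp
  have Wx: "W x \<ge> 0" by (rule W_nonneg)
  have Wle: "W t \<le> e * W x" if "x - d \<le> t" for t
    using W_mono[OF that] Wsh by simp
  obtain y where y: "0 < y" "y < 1" "x - d \<le> y" "y \<le> x + d" "\<bar>v1 y\<bar> \<le> 4 * e * W x / eps"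
  proof (cases "x + d \<le> 1")
    case True
    obtain z where z: "x < z" "z < x + d" "v (x + d) - v x = (x + d - x) * v1 z"
      using mvt_v[of x "x + d"] True x d by auto
    have "\<bar>v1 z\<bar> * d = \<bar>v (x + d) - v x\<bar>" using z d by (simp add: abs_mult)
    also have "\<dots> \<le> W (x + d) + W x" using v_bound[of x] v_bound[of "x + d"] x True d by simp
    also have "\<dots> \<le> 2 * e * W x"
    proof -
      have "W x \<le> e * W x" using e1 Wx by (simp add: mult_le_cancel_right1)
      then show ?thesis using W_mono[of x "x + d"] d by simp
    qed
    finally have "\<bar>v1 z\<bar> \<le> 2 * e * W x / d" using d by (simp add: field_simps)
    also have "\<dots> = 4 * e * W x / eps" unfolding d_def using eps_pos by simp
    finally show ?thesis using that[of z] z x True d by simp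
  next
    case False
    then have xd: "0 \<le> x - d" using d eps_lt1 unfolding d_def by simp
    obtain z where z: "x - d < z" "z < x" "v x - v (x - d) = (x - (x - d)) * v1 z"
      using mvt_v[of "x - d" x] xd x d by auto
    have "\<bar>v1 z\<bar> * d = \<bar>v x - v (x - d)\<bar>" using z d by (simp add: abs_mult)
    also have "\<dots> \<le> W x + W (x - d)" using v_bound[of x] v_bound[of "x - d"] x xd d by simp
    also have "\<dots> \<le> 2 * e * W x"
    proof -
      have "W x \<le> e * W x" using e1 Wx by (simp add: mult_le_cancel_right1)
      then show ?thesis using Wsh by simp
    qed
    finally have "\<bar>v1 z\<bar> \<le> 2 * e * W x / d" using d by (simp add: field_simps)
    also have "\<dots> = 4 * e * W x / eps" unfolding d_def using eps_pos by simp
    finally show ?thesis using that[of z] z x xd d by simp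
  qed
  define F where "F t = eps * v1 t + b t * v t" for t
  define F' where "F' t = c t * v t + b1 t * v t" for t
  have dF: "(F has_real_derivative F' t) (at t)" if "0 < t" "t < 1" for t
  proof -
    have "(F has_real_derivative eps * v2 t + (b1 t * v t + b t * v1 t)) (at t)"
      unfolding F_def using that by (auto intro!: derivative_eq_intros v1_der b_der v_der)
    moreover have "eps * v2 t + (b1 t * v t + b t * v1 t) = F' t"
      unfolding F'_def using ode[OF that] by (simp add: algebra_simps)
    ultimately show ?thesis by simp
  qed
  have seg: "0 < t \<and> t < 1 \<and> x - d \<le> t" if "min x y \<le> t" "t \<le> max x y" for t
    using that x y by (auto simp: min_def max_def split: if_splits)
  have Fb: "\<bar>F x - F y\<bar> \<le> (Cm + Bp) * (e * W x) * \<bar>x - y\<bar>"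
  proof (rule deriv_bound_seg)
    fix t assume t: "min y x \<le> t" "t \<le> max y x"
    then have t': "0 < t" "t < 1" "x - d \<le> t" using seg[of t] by (auto simp: min_def max_def split: if_splits)
    show "(F has_real_derivative F' t) (at t)" using dF t' by simp
    have "\<bar>F' t\<bar> \<le> (Cm + Bp) * \<bar>v t\<bar>"
    proof -
      have "\<bar>F' t\<bar> \<le> \<bar>c t\<bar> * \<bar>v t\<bar> + \<bar>b1 t\<bar> * \<bar>v t\<bar>"
        unfolding F'_def by (metis abs_mult abs_triangle_ineq)
      also have "\<dots> \<le> Cm * \<bar>v t\<bar> + Bp * \<bar>v t\<bar>"
        using c_bd[of t] b1_bd[of t] t' by (intro add_mono mult_right_mono) auto
      finally show ?thesis by (simp add: algebra_simps)
    qed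
    also have "\<dots> \<le> (Cm + Bp) * (e * W x)"
      using v_bound[of t] t' Wle[of t] consts_nonneg by (intro mult_left_mono) auto
    finally show "\<bar>F' t\<bar> \<le> (Cm + Bp) * (e * W x)" .
  qed
  have xy: "\<bar>x - y\<bar> \<le> d" using y by simp
  have vy: "\<bar>v y\<bar> \<le> e * W x" using v_bound[of y] y Wle[of y] by simp
  have vx: "\<bar>v x\<bar> \<le> W x" using v_bound[of x] x by simp
  have "eps * \<bar>v1 x\<bar> = \<bar>F x - b x * v x\<bar>" unfolding F_def using eps_pos by (simp add: abs_mult)
  also have "\<dots> \<le> \<bar>F x - F y\<bar> + \<bar>F y\<bar> + \<bar>b x\<bar> * \<bar>v x\<bar>"
  proof -
    have "\<bar>F x - b x * v x\<bar> \<le> \<bar>F x\<bar> + \<bar>b x * v x\<bar>" by (rule abs_triangle_ineq4)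
    moreover have "\<bar>F x\<bar> \<le> \<bar>F x - F y\<bar> + \<bar>F y\<bar>" by (metis abs_triangle_ineq diff_add_cancel)
    ultimately show ?thesis by (simp add: abs_mult)
  qed
  also have "\<dots> \<le> (Cm + Bp) * (e * W x) * d + (eps * \<bar>v1 y\<bar> + Bm * (e * W x)) + Bm * W x"
  proof -
    have "(Cm + Bp) * (e * W x) * \<bar>x - y\<bar> \<le> (Cm + Bp) * (e * W x) * d"
      using xy consts_nonneg e1 Wx by (intro mult_left_mono) auto
    moreover have "\<bar>F y\<bar> \<le> eps * \<bar>v1 y\<bar> + Bm * (e * W x)"
    proof -
      have "\<bar>F y\<bar> \<le> \<bar>eps * v1 y\<bar> + \<bar>b y * v y\<bar>" unfolding F_def by (rule abs_triangle_ineq)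
      then have "\<bar>F y\<bar> \<le> eps * \<bar>v1 y\<bar> + \<bar>b y\<bar> * \<bar>v y\<bar>" using eps_pos by (simp add: abs_mult)
      also have "\<bar>b y\<bar> * \<bar>v y\<bar> \<le> Bm * (e * W x)"
        using b_bd[of y] y vy by (intro mult_mono) auto
      finally show ?thesis by simp
    qed
    moreover have "\<bar>b x\<bar> * \<bar>v x\<bar> \<le> Bm * W x" using b_bd[of x] x vx by (intro mult_mono) auto
    ultimately show ?thesis using Fb by linarith
  qed
  also have "\<dots> \<le> K1 * W x"
  proof -
    have "eps * \<bar>v1 y\<bar> \<le> 4 * e * W x" using y(5) eps_pos by (simp add: field_simps)
    moreover have "(Cm + Bp) * (e * W x) * d \<le> (Cm + Bp) * (e * W x)"
      using d consts_nonneg e1 Wx by (intro mult_left_le) auto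
    moreover have "Bm * W x \<le> Bm * (e * W x)" using e1 Wx consts_nonneg
      by (intro mult_left_mono) (auto simp: mult_le_cancel_right1)
    ultimately show ?thesis unfolding K1_def e_def[symmetric] by (simp add: algebra_simps)
  qed
  finally show ?thesis using eps_pos by (simp add: field_simps)
qed

end

context cprob
begin

lemma inv_eps_ge1: "1 \<le> 1 / eps" using eps_pos eps_lt1 by simp

lemma eps_pow_le: "n \<le> m \<Longrightarrow> X \<ge> 0 \<Longrightarrow> X / eps ^ n \<le> X / eps ^ m"
proof -
  assume nm: "n \<le> m" and X: "X \<ge> 0"
  have "eps ^ m \<le> eps ^ n" using nm eps_pos eps_lt1 by (intro power_decreasing) auto
  then show ?thesis using X eps_pos by (intro divide_left_mono) auto
qed

definition "K2 = Cm + Bm * K1"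

lemma K1_nonneg: "K1 \<ge> 0" unfolding K1_def using consts_nonneg by simp
lemma K2_nonneg: "K2 \<ge> 0" unfolding K2_def using consts_nonneg K1_nonneg by simp

lemma v2_eq: "0 < x \<Longrightarrow> x < 1 \<Longrightarrow> v2 x = (c x * v x - b x * v1 x) / eps"
  using ode[of x] eps_pos by (simp add: field_simps)

lemma v2_bound:
  assumes x: "0 < x" "x < 1"
  shows "\<bar>v2 x\<bar> \<le> K2 * W x / eps\<^sup>2"
proof -
  have "\<bar>c x * v x - b x * v1 x\<bar> \<le> \<bar>c x\<bar> * \<bar>v x\<bar> + \<bar>b x\<bar> * \<bar>v1 x\<bar>"
    by (metis abs_mult abs_triangle_ineq4)
  also have "\<dots> \<le> Cm * W x + Bm * (K1 * W x / eps)"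
    using c_bd[of x] b_bd[of x] v_bound[of x] v1_bound[OF x] x
    by (intro add_mono mult_mono) (auto simp: W_nonneg)
  also have "\<dots> \<le> Cm * (W x / eps) + Bm * (K1 * W x / eps)"
    using eps_pow_le[of 0 1 "W x"] W_nonneg consts_nonneg by (intro add_mono mult_left_mono) auto
  also have "\<dots> = K2 * W x / eps" unfolding K2_def by (simp add: algebra_simps add_divide_distrib)
  finally have "\<bar>c x * v x - b x * v1 x\<bar> / eps \<le> K2 * W x / eps / eps"
    using eps_pos by (intro divide_right_mono) auto
  then show ?thesis using v2_eq[OF x] eps_pos by (simp add: power2_eq_square)
qed

definition "v3 t = (c1 t * v t + c t * v1 t - b1 t * v1 t - b t * v2 t) / eps"

lemma v2_der:
  assumes x: "0 < x" "x < 1"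
  shows "(v2 has_real_derivative v3 x) (at x)"
proof -
  have "((\<lambda>t. (c t * v t - b t * v1 t) / eps) has_real_derivative v3 x) (at x)"
    unfolding v3_def using x eps_pos
    by (auto intro!: derivative_eq_intros c_der v_der b_der v1_der simp: field_simps)
  then show ?thesis
    by (rule has_field_derivative_transform_within_open[where S="{0<..<1}"]) (use x v2_eq in auto)
qed

definition "K3 = Cp + Cm * K1 + Bp * K1 + Bm * K2"

lemma v3_bound:
  assumes x: "0 < x" "x < 1"
  shows "\<bar>v3 x\<bar> \<le> K3 * W x / eps ^ 3"
proof -
  have W: "W x \<ge> 0" by (rule W_nonneg)
  have "\<bar>c1 x * v x + c x * v1 x - b1 x * v1 x - b x * v2 x\<bar>
      \<le> \<bar>c1 x\<bar> * \<bar>v x\<bar> + \<bar>c x\<bar> * \<bar>v1 x\<bar> + \<bar>b1 x\<bar> * \<bar>v1 x\<bar> + \<bar>b x\<bar> * \<bar>v2 x\<bar>"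
    by (simp add: abs_mult[symmetric])
  also have "\<dots> \<le> Cp * W x + Cm * (K1 * W x / eps) + Bp * (K1 * W x / eps) + Bm * (K2 * W x / eps\<^sup>2)"
    using c1_bd[of x] c_bd[of x] b1_bd[of x] b_bd[of x] v_bound[of x] v1_bound[OF x] v2_bound[OF x] x
    by (intro add_mono mult_mono) (auto simp: W_nonneg)
  also have "\<dots> \<le> Cp * (W x / eps\<^sup>2) + Cm * (K1 * W x / eps\<^sup>2) + Bp * (K1 * W x / eps\<^sup>2) + Bm * (K2 * W x / eps\<^sup>2)"
    using eps_pow_le[of 0 2 "W x"] eps_pow_le[of 1 2 "K1 * W x"] W consts_nonneg K1_nonneg
    by (intro add_mono mult_left_mono) auto
  also have "\<dots> = K3 * W x / eps\<^sup>2" unfolding K3_def by (simp add: algebra_simps add_divide_distrib)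
  finally have "\<bar>c1 x * v x + c x * v1 x - b1 x * v1 x - b x * v2 x\<bar> / eps \<le> K3 * W x / eps\<^sup>2 / eps"
    using eps_pos by (intro divide_right_mono) auto
  then show ?thesis unfolding v3_def using eps_pos by (simp add: power2_eq_square power3_eq_cube)
qed

end

definition ell3 :: "real \<Rightarrow> real \<Rightarrow> real \<Rightarrow> real \<Rightarrow> real \<Rightarrow> real \<Rightarrow> real" where
  "ell3 epsS bi h ap a0 am = epsS * (ap - 2 * a0 + am) / h\<^sup>2 + bi * (ap - a0) / h"

lemma ell3_lin: "ell3 epsS bi h (ap + c * bp) (a0 + c * b0) (am + c * bm) = ell3 epsS bi h ap a0 am + c * ell3 epsS bi h bp b0 bm"
  unfolding ell3_def by (simp add: algebra_simps add_divide_distrib diff_divide_distrib)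

lemma ell3_add: "ell3 epsS bi h (ap + bp) (a0 + b0) (am + bm) = ell3 epsS bi h ap a0 am + ell3 epsS bi h bp b0 bm"
  using ell3_lin[of epsS bi h ap 1 bp a0 b0 am bm] by simp

lemma ell3_const: "ell3 epsS bi h c c c = 0" unfolding ell3_def by simp

lemma ell3_Y: "ell3 epsS bi h Yp 0 Ym = epsS * (Yp + Ym) / h\<^sup>2 + bi * Yp / h"
  unfolding ell3_def by simp

lemma ell3_LN: "h > 0 \<Longrightarrow> epsS * (((ap - a0) / h - (a0 - am) / h) / ((h + h) / 2)) + bi * ((ap - a0) / h)
   = ell3 epsS bi h ap a0 am"
  unfolding ell3_def by (simp add: field_simps power2_eq_square)

context
  fixes eps h bi X epsS :: real
  assumes eps: "eps > 0" and h: "h > 0" and bi: "bi > 0" and X: "X > 1"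
    and es: "epsS = bi * h / (X - 1)"
begin

lemma ell3_phi: "ell3 epsS bi h (1 / X) 1 X = 0"
proof -
  have X0: "X - 1 \<noteq> 0" "X \<noteq> 0" using X by auto
  show ?thesis unfolding ell3_def es using h X0 by (simp add: field_simps power2_eq_square)
qed

lemma ell3_lin1: "ell3 epsS bi h h 0 (- h) = bi"
  unfolding ell3_def using h by simp

lemma ell3_sq: "ell3 epsS bi h (h\<^sup>2) 0 (h\<^sup>2) = 2 * epsS + bi * h"
  unfolding ell3_def using h by (simp add: field_simps power2_eq_square)

lemma ell3_z1: "ell3 epsS bi h (h / bi - eps / bi\<^sup>2 + eps / bi\<^sup>2 * (1 / X)) 0 (- h / bi - eps / bi\<^sup>2 + eps / bi\<^sup>2 * X) = 1"
proof -
  have X0: "X - 1 \<noteq> 0" "X \<noteq> 0" using X by auto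
  show ?thesis unfolding ell3_def es using h bi X0 by (simp add: field_simps power2_eq_square)
qed

lemma ell3_z2: "ell3 epsS bi h (h\<^sup>2 / (2 * bi) - eps * h / bi\<^sup>2 + eps\<^sup>2 / bi ^ 3 * (1 - 1 / X)) 0
     (h\<^sup>2 / (2 * bi) + eps * h / bi\<^sup>2 + eps\<^sup>2 / bi ^ 3 * (1 - X)) = epsS / bi - eps / bi + h / 2"
proof -
  have X0: "X - 1 \<noteq> 0" "X \<noteq> 0" using X by auto
  show ?thesis unfolding ell3_def es using h bi X0 eps by (simp add: field_simps power2_eq_square power3_eq_cube)
qed

end

lemma abs_mult_le: "\<bar>x\<bar> \<le> (A::real) \<Longrightarrow> \<bar>y\<bar> \<le> B \<Longrightarrow> \<bar>x * y\<bar> \<le> A * B"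
  unfolding abs_mult by (rule mult_mono) auto

context cprob
begin

definition "KM kmax = Bpp * K1 + 2 * Bp * K2 + Bp * kmax * K3 + Cpp + 2 * Cp * K1 + Cm * K2"
definition "Km1 = Bp * K1 + Cp + Cm * K1"
definition "Tc kmax = (exp (Bm * kmax))\<^sup>2 * KM kmax * (2 + Bm * kmax) + Km1 * Bm\<^sup>2 * exp (Bm * kmax) / (2 * beta)"

lemma K3_nonneg: "K3 \<ge> 0" unfolding K3_def using consts_nonneg K1_nonneg K2_nonneg by simp

lemma b_lip: "0 < s \<Longrightarrow> s < 1 \<Longrightarrow> 0 < t \<Longrightarrow> t < 1 \<Longrightarrow> \<bar>b t - b s\<bar> \<le> Bp * \<bar>t - s\<bar>"
  by (rule deriv_bound_seg[where f'=b1]) (auto intro!: b_der b1_bd simp: min_def max_def split: if_splits)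

context
  fixes s0 h kmax :: real
  assumes s0h: "0 \<le> s0 - h" "s0 + h < 1" and h: "h > 0" and kb: "h / eps \<le> kmax"
begin

lemma s0_in: "0 < s0" "s0 < 1" using s0h h by auto

definition "Wh = W (s0 - h)"

lemma Wh_nonneg: "Wh \<ge> 0" unfolding Wh_def by (rule W_nonneg)

lemma kmax_nonneg: "kmax \<ge> 0" using kb h eps_pos by (smt (verit) divide_pos_pos)

lemma vs_bounds:
  assumes t: "0 < t" "t < 1" "s0 - h \<le> t"
  shows "\<bar>v t\<bar> \<le> Wh" "\<bar>v1 t\<bar> \<le> K1 * Wh / eps" "\<bar>v2 t\<bar> \<le> K2 * Wh / eps\<^sup>2" "\<bar>v3 t\<bar> \<le> K3 * Wh / eps ^ 3"
proof -
  have Wt: "W t \<le> Wh" unfolding Wh_def by (rule W_mono[OF t(3)])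
  show "\<bar>v t\<bar> \<le> Wh" using v_bound[of t] t Wt by simp
  show "\<bar>v1 t\<bar> \<le> K1 * Wh / eps"
    using v1_bound[of t] t Wt K1_nonneg eps_pos
    by (smt (verit, ccfv_SIG) divide_right_mono mult_left_mono)
  show "\<bar>v2 t\<bar> \<le> K2 * Wh / eps\<^sup>2"
    using v2_bound[of t] t Wt K2_nonneg eps_pos
    by (smt (verit, ccfv_SIG) divide_right_mono mult_left_mono zero_less_power)
  show "\<bar>v3 t\<bar> \<le> K3 * Wh / eps ^ 3"
    using v3_bound[of t] t Wt K3_nonneg eps_pos
    by (smt (verit, ccfv_SIG) divide_right_mono mult_left_mono zero_less_power)
qed

abbreviation "bi \<equiv> b s0"

lemma bi_pos: "bi > beta" using b_gt s0_in by simp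
lemma bi_le: "bi \<le> Bm" using b_bd[of s0] s0_in by simp

definition "m t = (bi - b t) * v1 t + c t * v t" for t
definition "m1f t = - b1 t * v1 t + (bi - b t) * v2 t + c1 t * v t + c t * v1 t" for t
definition "m2f t = - b2 t * v1 t - 2 * b1 t * v2 t + (bi - b t) * v3 t + c2 t * v t + 2 * c1 t * v1 t + c t * v2 t" for t

lemma dm: "0 < t \<Longrightarrow> t < 1 \<Longrightarrow> (m has_real_derivative m1f t) (at t)"
  unfolding m_def m1f_def by (auto intro!: derivative_eq_intros b_der v1_der c_der v_der simp: algebra_simps)

lemma dm1: "0 < t \<Longrightarrow> t < 1 \<Longrightarrow> (m1f has_real_derivative m2f t) (at t)"
  unfolding m1f_def m2f_def
  by (auto intro!: derivative_eq_intros b_der b1_der v1_der v2_der c_der c1_der v_der simp: algebra_simps)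

lemma m2f_bound:
  assumes t: "s0 - h < t" "t < s0 + h"
  shows "\<bar>m2f t\<bar> \<le> KM kmax * Wh / eps\<^sup>2"
proof -
  have t01: "0 < t" "t < 1" using t s0h by auto
  note vb = vs_bounds[OF t01, simplified, OF less_imp_le[OF t(1)]]
  have bd: "\<bar>bi - b t\<bar> \<le> Bp * h"
  proof -
    have "\<bar>b t - b s0\<bar> \<le> Bp * \<bar>t - s0\<bar>" by (rule b_lip[OF s0_in t01])
    also have "\<dots> \<le> Bp * h" using t consts_nonneg by (intro mult_left_mono) auto
    finally show ?thesis by (simp add: abs_minus_commute)
  qed
  have e1: "\<bar>b2 t * v1 t\<bar> \<le> Bpp * (K1 * Wh / eps)"
    using b2_bd[of t] t01 vb(2) by (intro abs_mult_le) auto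
  have e2: "\<bar>2 * b1 t * v2 t\<bar> \<le> 2 * Bp * (K2 * Wh / eps\<^sup>2)"
    using b1_bd[of t] t01 vb(3) by (intro abs_mult_le) auto
  have e3: "\<bar>(bi - b t) * v3 t\<bar> \<le> Bp * h * (K3 * Wh / eps ^ 3)"
    using bd vb(4) by (intro abs_mult_le) auto
  have e4: "\<bar>c2 t * v t\<bar> \<le> Cpp * Wh"
    using c2_bd[of t] t01 vb(1) by (intro abs_mult_le) auto
  have e5: "\<bar>2 * c1 t * v1 t\<bar> \<le> 2 * Cp * (K1 * Wh / eps)"
    using c1_bd[of t] t01 vb(2) by (intro abs_mult_le) auto
  have e6: "\<bar>c t * v2 t\<bar> \<le> Cm * (K2 * Wh / eps\<^sup>2)"
    using c_bd[of t] t01 vb(3) by (intro abs_mult_le) auto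
  have "\<bar>m2f t\<bar> \<le> \<bar>b2 t * v1 t\<bar> + \<bar>2 * b1 t * v2 t\<bar> + \<bar>(bi - b t) * v3 t\<bar> + \<bar>c2 t * v t\<bar> + \<bar>2 * c1 t * v1 t\<bar> + \<bar>c t * v2 t\<bar>"
    unfolding m2f_def by linarith
  also have "\<dots> \<le> Bpp * (K1 * Wh / eps) + 2 * Bp * (K2 * Wh / eps\<^sup>2) + Bp * h * (K3 * Wh / eps ^ 3)
      + Cpp * Wh + 2 * Cp * (K1 * Wh / eps) + Cm * (K2 * Wh / eps\<^sup>2)"
    using e1 e2 e3 e4 e5 e6 by linarith
  also have "\<dots> \<le> Bpp * (K1 * Wh / eps\<^sup>2) + 2 * Bp * (K2 * Wh / eps\<^sup>2) + Bp * kmax * (K3 * Wh / eps\<^sup>2)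
      + Cpp * (Wh / eps\<^sup>2) + 2 * Cp * (K1 * Wh / eps\<^sup>2) + Cm * (K2 * Wh / eps\<^sup>2)"
  proof -
    have w0: "K1 * Wh \<ge> 0" "Wh \<ge> 0" "K3 * Wh \<ge> 0" using K1_nonneg Wh_nonneg K3_nonneg by auto
    have a1: "K1 * Wh / eps \<le> K1 * Wh / eps\<^sup>2" using eps_pow_le[of 1 2 "K1 * Wh"] w0 by simp
    have a2: "Wh \<le> Wh / eps\<^sup>2" using eps_pow_le[of 0 2 Wh] w0 by simp
    have a3: "h * (K3 * Wh / eps ^ 3) \<le> kmax * (K3 * Wh / eps\<^sup>2)"
    proof -
      have "h * (K3 * Wh / eps ^ 3) = (h / eps) * (K3 * Wh / eps\<^sup>2)" using eps_pos
        by (simp add: field_simps power2_eq_square power3_eq_cube)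
      also have "\<dots> \<le> kmax * (K3 * Wh / eps\<^sup>2)" using kb w0 by (intro mult_right_mono) auto
      finally show ?thesis .
    qed
    have "Bpp * (K1 * Wh / eps) \<le> Bpp * (K1 * Wh / eps\<^sup>2)" using a1 consts_nonneg by (intro mult_left_mono) auto
    moreover have "Bp * h * (K3 * Wh / eps ^ 3) \<le> Bp * kmax * (K3 * Wh / eps\<^sup>2)"
      using mult_left_mono[OF a3, of Bp] consts_nonneg by (simp add: mult.assoc)
    moreover have "Cpp * Wh \<le> Cpp * (Wh / eps\<^sup>2)" using a2 consts_nonneg by (intro mult_left_mono) auto
    moreover have "2 * Cp * (K1 * Wh / eps) \<le> 2 * Cp * (K1 * Wh / eps\<^sup>2)" using a1 consts_nonneg by (intro mult_left_mono) auto
    ultimately show ?thesis by linarith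
  qed
  also have "\<dots> = KM kmax * Wh / eps\<^sup>2" unfolding KM_def by (simp add: algebra_simps add_divide_distrib)
  finally show ?thesis .
qed

lemma Km1_nonneg: "Km1 \<ge> 0" unfolding Km1_def using consts_nonneg K1_nonneg by simp
lemma KM_nonneg: "KM kmax \<ge> 0" unfolding KM_def using consts_nonneg K1_nonneg K2_nonneg K3_nonneg kmax_nonneg by simp

definition "m0 = m s0"
definition "m1 = m1f s0"

lemma m0_eq: "m0 = c s0 * v s0" unfolding m0_def m_def by simp

lemma m1_bound: "\<bar>m1\<bar> \<le> Km1 * Wh / eps"
proof -
  note vb = vs_bounds[OF s0_in, simplified, OF _]
  have vb0: "\<bar>v s0\<bar> \<le> Wh" "\<bar>v1 s0\<bar> \<le> K1 * Wh / eps" using vs_bounds[OF s0_in] h by auto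
  have "\<bar>m1\<bar> \<le> \<bar>b1 s0 * v1 s0\<bar> + \<bar>c1 s0 * v s0\<bar> + \<bar>c s0 * v1 s0\<bar>"
    unfolding m1_def m1f_def by simp
  also have "\<dots> \<le> Bp * (K1 * Wh / eps) + Cp * Wh + Cm * (K1 * Wh / eps)"
    using b1_bd[of s0] c1_bd[of s0] c_bd[of s0] s0_in vb0
    by (intro add_mono abs_mult_le) auto
  also have "\<dots> \<le> Bp * (K1 * Wh / eps) + Cp * (Wh / eps) + Cm * (K1 * Wh / eps)"
    using eps_pow_le[of 0 1 Wh] Wh_nonneg consts_nonneg by (intro add_mono mult_left_mono) auto
  also have "\<dots> = Km1 * Wh / eps" unfolding Km1_def by (simp add: algebra_simps add_divide_distrib)
  finally show ?thesis .
qed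

lemma in_I: "s0 - h < t \<Longrightarrow> t < s0 + h \<Longrightarrow> 0 < t \<and> t < 1" using s0h by auto

lemma seg_I: "s0 - h < t \<Longrightarrow> t < s0 + h \<Longrightarrow> min s0 t \<le> y \<Longrightarrow> y \<le> max s0 t \<Longrightarrow> s0 - h < y \<and> y < s0 + h"
  using h by (auto simp: min_def max_def split: if_splits)

definition "Rf t = m t - m0 - m1 * (t - s0)" for t

lemma R_bound:
  assumes t: "s0 - h < t" "t < s0 + h"
  shows "\<bar>Rf t\<bar> \<le> KM kmax * Wh / eps\<^sup>2 * h * h"
proof -
  have d1: "\<bar>m1f y - m1f s0\<bar> \<le> KM kmax * Wh / eps\<^sup>2 * h" if y: "s0 - h < y" "y < s0 + h" for y
  proof -
    have "\<bar>m1f y - m1f s0\<bar> \<le> KM kmax * Wh / eps\<^sup>2 * \<bar>y - s0\<bar>"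
      by (rule deriv_bound_seg[where f'=m2f]) (use seg_I[OF y] in \<open>auto intro!: dm1 m2f_bound dest: in_I\<close>)
    also have "\<dots> \<le> KM kmax * Wh / eps\<^sup>2 * h"
      using y KM_nonneg Wh_nonneg eps_pos by (intro mult_left_mono) auto
    finally show ?thesis .
  qed
  have "\<bar>Rf t - Rf s0\<bar> \<le> KM kmax * Wh / eps\<^sup>2 * h * \<bar>t - s0\<bar>"
  proof (rule deriv_bound_seg[where f'="\<lambda>y. m1f y - m1"])
    fix y assume "min s0 t \<le> y" "y \<le> max s0 t"
    then have y: "s0 - h < y" "y < s0 + h" using seg_I[OF t] by auto
    show "(Rf has_real_derivative m1f y - m1) (at y)"
      unfolding Rf_def using in_I[OF y] by (auto intro!: derivative_eq_intros dm)
    show "\<bar>m1f y - m1\<bar> \<le> KM kmax * Wh / eps\<^sup>2 * h" using d1[OF y] unfolding m1_def .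
  qed
  also have "\<dots> \<le> KM kmax * Wh / eps\<^sup>2 * h * h"
    using t KM_nonneg Wh_nonneg eps_pos h by (intro mult_left_mono) auto
  finally show ?thesis unfolding Rf_def m0_def by simp
qed

definition "G t = eps * v1 t + bi * v t - m0 * (t - s0) - m1 * (t - s0)\<^sup>2 / 2 - (eps * v1 s0 + bi * v s0)" for t

lemma dG: "0 < t \<Longrightarrow> t < 1 \<Longrightarrow> (G has_real_derivative Rf t) (at t)"
proof -
  assume t: "0 < t" "t < 1"
  have "(G has_real_derivative eps * v2 t + bi * v1 t - m0 - m1 * (t - s0)) (at t)"
    unfolding G_def using t by (auto intro!: derivative_eq_intros v_der v1_der simp: power2_eq_square field_simps)
  moreover have "eps * v2 t + bi * v1 t - m0 - m1 * (t - s0) = Rf t"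
    unfolding Rf_def m_def using ode[OF t] by (simp add: algebra_simps)
  ultimately show ?thesis by simp
qed

lemma G_bound:
  assumes t: "s0 - h < t" "t < s0 + h"
  shows "\<bar>G t\<bar> \<le> KM kmax * Wh / eps\<^sup>2 * h * h * h"
proof -
  have "\<bar>G t - G s0\<bar> \<le> KM kmax * Wh / eps\<^sup>2 * h * h * \<bar>t - s0\<bar>"
  proof (rule deriv_bound_seg[where f'=Rf])
    fix y assume "min s0 t \<le> y" "y \<le> max s0 t"
    then have y: "s0 - h < y" "y < s0 + h" using seg_I[OF t] by auto
    show "(G has_real_derivative Rf y) (at y)" using dG in_I[OF y] by auto
    show "\<bar>Rf y\<bar> \<le> KM kmax * Wh / eps\<^sup>2 * h * h" by (rule R_bound[OF y])
  qed
  also have "\<dots> \<le> KM kmax * Wh / eps\<^sup>2 * h * h * h"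
    using t KM_nonneg Wh_nonneg eps_pos h by (intro mult_left_mono) auto
  finally show ?thesis unfolding G_def by simp
qed

lemma bi_pos': "bi > 0" using bi_pos beta_pos by simp

definition "al = v s0 + eps * v1 s0 / bi"
definition "bc = v s0 - al"
definition "cst = - bc - m0 * eps / bi\<^sup>2 + m1 * eps\<^sup>2 / bi ^ 3"
definition "Qf t = v t - al - m0 * ((t - s0) / bi - eps / bi\<^sup>2) - m1 * ((t - s0)\<^sup>2 / (2 * bi) - eps * (t - s0) / bi\<^sup>2 + eps\<^sup>2 / bi ^ 3)" for t
definition "Q1 t = v1 t - m0 / bi - m1 * ((t - s0) / bi - eps / bi\<^sup>2)" for t
definition "Ef t = exp (bi * (t - s0) / eps)" for t
definition "P t = Qf t * Ef t + cst" for t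

lemma dP: "0 < t \<Longrightarrow> t < 1 \<Longrightarrow> (P has_real_derivative G t * Ef t / eps) (at t)"
proof -
  assume t: "0 < t" "t < 1"
  have dQ: "(Qf has_real_derivative Q1 t) (at t)"
  proof -
    have bne: "bi \<noteq> 0" using bi_pos' by simp
    show ?thesis
      unfolding Qf_def[abs_def] Q1_def using bne
      by (auto intro!: derivative_eq_intros v_der[OF t] simp: field_simps power2_eq_square)
  qed
  have dE: "(Ef has_real_derivative Ef t * (bi / eps)) (at t)"
    unfolding Ef_def using eps_pos by (auto intro!: derivative_eq_intros simp: field_simps)
  have d: "(P has_real_derivative Q1 t * Ef t + Qf t * (Ef t * (bi / eps))) (at t)"
    unfolding P_def by (auto intro!: derivative_eq_intros dQ dE)
  have key: "eps * Q1 t + bi * Qf t = G t"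
  proof -
    define u where "u = t - s0"
    have bne: "bi \<noteq> 0" using bi_pos' by simp
    have "eps * Q1 t + bi * Qf t = eps * v1 t + bi * v t - bi * al - m0 * u - m1 * u\<^sup>2 / 2"
      unfolding Q1_def Qf_def u_def[symmetric] using bne
      by (simp add: field_simps power2_eq_square power3_eq_cube)
    also have "\<dots> = G t" unfolding G_def al_def u_def using bne by (simp add: field_simps)
    finally show ?thesis .
  qed
  have e: "Q1 t * Ef t + Qf t * (Ef t * (bi / eps)) = Ef t * (eps * Q1 t + bi * Qf t) / eps"
    using eps_pos by (simp add: field_simps)
  show ?thesis using d unfolding e key by (simp add: mult.commute)
qed

lemma P_s0: "P s0 = 0"
proof -
  have bne: "bi \<noteq> 0" using bi_pos' by simp
  have "Ef s0 = 1" unfolding Ef_def by simp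
  then show ?thesis unfolding P_def Qf_def cst_def bc_def using bne by (simp add: field_simps power2_eq_square power3_eq_cube)
qed

lemma P_cont: "continuous_on {s0 - h..s0 + h} P"
proof -
  have cv: "continuous_on {s0 - h..s0 + h} v" by (rule continuous_on_subset[OF v_cont]) (use s0h in auto)
  have ce: "continuous_on {s0 - h..s0 + h} Ef" unfolding Ef_def[abs_def] using eps_pos by (intro continuous_intros) auto
  have cq: "continuous_on {s0 - h..s0 + h} Qf" unfolding Qf_def[abs_def] using bi_pos' by (intro continuous_intros cv) auto
  show ?thesis unfolding P_def[abs_def] by (intro continuous_intros cq ce)
qed

definition "X = exp (bi * h / eps)"
definition "XM = exp (Bm * kmax)"

lemma X_gt1: "X > 1" unfolding X_def using bi_pos' h eps_pos by (simp add: one_less_exp_iff)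

lemma X_le: "X \<le> XM"
proof -
  have "bi * h / eps \<le> Bm * kmax"
  proof -
    have "bi * h / eps = bi * (h / eps)" by simp
    also have "\<dots> \<le> Bm * kmax" using bi_le kb bi_pos' h eps_pos by (intro mult_mono) auto
    finally show ?thesis .
  qed
  then show ?thesis unfolding X_def XM_def by simp
qed

definition "Pb = KM kmax * Wh / eps\<^sup>2 * h * h * h * X / eps * h"

lemma P_bound:
  assumes t: "s0 - h \<le> t" "t \<le> s0 + h"
  shows "\<bar>P t\<bar> \<le> Pb"
proof -
  have "\<bar>P t - P s0\<bar> \<le> KM kmax * Wh / eps\<^sup>2 * h * h * h * X / eps * \<bar>t - s0\<bar>"
  proof (rule deriv_bound_pts[OF _ _ _ _ P_cont, where f'="\<lambda>y. G y * Ef y / eps"])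
    fix y assume y: "s0 - h < y" "y < s0 + h"
    show "(P has_real_derivative G y * Ef y / eps) (at y)" using dP in_I[OF y] by auto
    have E: "0 \<le> Ef y" "Ef y \<le> X"
    proof -
      show "0 \<le> Ef y" unfolding Ef_def by simp
      have "bi * (y - s0) \<le> bi * h" using y bi_pos' by (intro mult_left_mono) auto
      then have "bi * (y - s0) / eps \<le> bi * h / eps" using eps_pos by (intro divide_right_mono) auto
      then show "Ef y \<le> X" unfolding Ef_def X_def by simp
    qed
    have "\<bar>G y * Ef y / eps\<bar> = \<bar>G y\<bar> * Ef y / eps" using E eps_pos by (simp add: abs_mult)
    also have "\<dots> \<le> KM kmax * Wh / eps\<^sup>2 * h * h * h * X / eps"
      using G_bound[OF y] E eps_pos by (intro divide_right_mono mult_mono) auto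
    finally show "\<bar>G y * Ef y / eps\<bar> \<le> KM kmax * Wh / eps\<^sup>2 * h * h * h * X / eps" .
  qed (use t h in auto)
  also have "\<dots> \<le> Pb" unfolding Pb_def using t KM_nonneg Wh_nonneg eps_pos h X_gt1
    by (intro mult_left_mono) auto
  finally show ?thesis using P_s0 by simp
qed

lemma E_p: "Ef (s0 + h) = X" unfolding Ef_def X_def by simp
lemma E_m: "Ef (s0 - h) = 1 / X"
  unfolding Ef_def X_def by (simp add: exp_minus field_simps)

lemma vp_repr: "v (s0 + h) = (((P (s0 + h) / X + al * 1) + bc * (1 / X)) + m0 * (h / bi - eps / bi\<^sup>2 + eps / bi\<^sup>2 * (1 / X)))
     + m1 * (h\<^sup>2 / (2 * bi) - eps * h / bi\<^sup>2 + eps\<^sup>2 / bi ^ 3 * (1 - 1 / X))"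
proof -
  have bne: "bi \<noteq> 0" using bi_pos' by simp
  have X0: "X \<noteq> 0" using X_gt1 by simp
  show ?thesis unfolding P_def E_p Qf_def cst_def using bne X0
    by (simp add: field_simps power2_eq_square power3_eq_cube)
qed

lemma vm_repr: "v (s0 - h) = (((P (s0 - h) * X + al * 1) + bc * X) + m0 * (- h / bi - eps / bi\<^sup>2 + eps / bi\<^sup>2 * X))
     + m1 * (h\<^sup>2 / (2 * bi) + eps * h / bi\<^sup>2 + eps\<^sup>2 / bi ^ 3 * (1 - X))"
proof -
  have bne: "bi \<noteq> 0" using bi_pos' by simp
  have X0: "X \<noteq> 0" using X_gt1 by simp
  show ?thesis unfolding P_def E_m Qf_def cst_def using bne X0
    by (simp add: field_simps power2_eq_square power3_eq_cube)
qed

lemma v0_repr: "v s0 = (((0 + al * 1) + bc * 1) + m0 * 0) + m1 * 0"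
  unfolding bc_def by simp

definition "epsS = eps * sigma (bi * h / (2 * eps))"

lemma es: "epsS = bi * h / (X - 1)"
  unfolding epsS_def X_def by (rule eps_sigma[OF eps_pos bi_pos' h])

lemma epsS_le: "epsS \<le> eps" and epsS_pos: "epsS > 0"
proof -
  have "sigma (bi * h / (2 * eps)) \<le> 1" "sigma (bi * h / (2 * eps)) > 0"
    using bi_pos' h eps_pos by (auto intro!: sigma_le1 sigma_pos)
  then show "epsS \<le> eps" "epsS > 0" unfolding epsS_def using eps_pos by auto
qed

definition "L2 = epsS / bi - eps / bi + h / 2"

lemma LN_expr_eq:
  "- epsS * (((v (s0 + h) - v s0) / h - (v s0 - v (s0 - h)) / h) / ((h + h) / 2)) - bi * ((v (s0 + h) - v s0) / h) + c s0 * v s0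
   = - ell3 epsS bi h (P (s0 + h) / X) 0 (P (s0 - h) * X) - m1 * L2"
proof -
  note A = eps_pos h bi_pos' X_gt1 es
  have "epsS * (((v (s0 + h) - v s0) / h - (v s0 - v (s0 - h)) / h) / ((h + h) / 2)) + bi * ((v (s0 + h) - v s0) / h)
      = ell3 epsS bi h (v (s0 + h)) (v s0) (v (s0 - h))" by (rule ell3_LN[OF h])
  also have "\<dots> = ell3 epsS bi h (P (s0 + h) / X) 0 (P (s0 - h) * X) + al * ell3 epsS bi h 1 1 1
      + bc * ell3 epsS bi h (1 / X) 1 X
      + m0 * ell3 epsS bi h (h / bi - eps / bi\<^sup>2 + eps / bi\<^sup>2 * (1 / X)) 0 (- h / bi - eps / bi\<^sup>2 + eps / bi\<^sup>2 * X)
      + m1 * ell3 epsS bi h (h\<^sup>2 / (2 * bi) - eps * h / bi\<^sup>2 + eps\<^sup>2 / bi ^ 3 * (1 - 1 / X)) 0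
           (h\<^sup>2 / (2 * bi) + eps * h / bi\<^sup>2 + eps\<^sup>2 / bi ^ 3 * (1 - X))"
    unfolding vp_repr vm_repr v0_repr ell3_lin by simp
  also have "\<dots> = ell3 epsS bi h (P (s0 + h) / X) 0 (P (s0 - h) * X) + m0 + m1 * L2"
    unfolding ell3_const ell3_phi[OF A] ell3_z1[OF A] ell3_z2[OF A] L2_def by simp
  finally have F: "epsS * (((v (s0 + h) - v s0) / h - (v s0 - v (s0 - h)) / h) / ((h + h) / 2)) + bi * ((v (s0 + h) - v s0) / h)
      = ell3 epsS bi h (P (s0 + h) / X) 0 (P (s0 - h) * X) + m0 + m1 * L2" .
  have "- epsS * (((v (s0 + h) - v s0) / h - (v s0 - v (s0 - h)) / h) / ((h + h) / 2)) - bi * ((v (s0 + h) - v s0) / h) + c s0 * v s0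
     = - (epsS * (((v (s0 + h) - v s0) / h - (v s0 - v (s0 - h)) / h) / ((h + h) / 2)) + bi * ((v (s0 + h) - v s0) / h)) + c s0 * v s0"
    by (simp only: minus_mult_left[symmetric] minus_add_distrib diff_conv_add_uminus)
  also have "\<dots> = - ell3 epsS bi h (P (s0 + h) / X) 0 (P (s0 - h) * X) - m1 * L2"
    unfolding F m0_eq by simp
  finally show ?thesis .
qed

lemma trunc_bound:
  "\<bar>- epsS * (((v (s0 + h) - v s0) / h - (v s0 - v (s0 - h)) / h) / ((h + h) / 2)) - bi * ((v (s0 + h) - v s0) / h) + c s0 * v s0\<bar>
   \<le> Tc kmax * (h / eps)\<^sup>2 * Wh"
proof -
  define k where "k = h / eps"
  have k: "k > 0" "k \<le> kmax" unfolding k_def using h eps_pos kb by auto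
  have hk: "h = eps * k" unfolding k_def using eps_pos by simp
  have X1: "X > 1" by (rule X_gt1)
  have XXM: "X \<le> XM" by (rule X_le)
  have Pb_eq: "Pb = KM kmax * Wh * X * eps * k ^ 4"
    unfolding Pb_def k_def using eps_pos by (simp add: field_simps power2_eq_square power3_eq_cube power4_eq_xxxx)
  have Pb0: "Pb \<ge> 0" unfolding Pb_eq using KM_nonneg Wh_nonneg X1 eps_pos k by simp
  define Yp where "Yp = P (s0 + h) / X"
  define Ym where "Ym = P (s0 - h) * X"
  have Yp: "\<bar>Yp\<bar> \<le> X * Pb"
  proof -
    have "\<bar>Yp\<bar> = \<bar>P (s0 + h)\<bar> / X" unfolding Yp_def using X1 by simp
    also have "\<dots> \<le> \<bar>P (s0 + h)\<bar>" using X1 by (simp add: divide_le_eq mult_le_cancel_left1)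
    also have "\<dots> \<le> Pb" using P_bound[of "s0 + h"] h by simp
    also have "\<dots> \<le> X * Pb" using X1 Pb0 by (simp add: mult_le_cancel_right1)
    finally show ?thesis .
  qed
  have Ym: "\<bar>Ym\<bar> \<le> X * Pb"
  proof -
    have "\<bar>Ym\<bar> = X * \<bar>P (s0 - h)\<bar>" unfolding Ym_def using X1 by (simp add: abs_mult)
    also have "\<dots> \<le> X * Pb" using P_bound[of "s0 - h"] h X1 by (intro mult_left_mono) auto
    finally show ?thesis .
  qed
  have l1: "\<bar>ell3 epsS bi h Yp 0 Ym\<bar> \<le> (exp (Bm * kmax))\<^sup>2 * KM kmax * (2 + Bm * kmax) * (k\<^sup>2 * Wh)"
  proof -
    have "\<bar>ell3 epsS bi h Yp 0 Ym\<bar> \<le> epsS * (\<bar>Yp\<bar> + \<bar>Ym\<bar>) / h\<^sup>2 + bi * \<bar>Yp\<bar> / h"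
    proof -
      have a: "\<bar>epsS * (Yp + Ym) / h\<^sup>2\<bar> \<le> epsS * (\<bar>Yp\<bar> + \<bar>Ym\<bar>) / h\<^sup>2"
      proof -
        have "\<bar>epsS * (Yp + Ym) / h\<^sup>2\<bar> = epsS * \<bar>Yp + Ym\<bar> / h\<^sup>2" using epsS_pos h by (simp add: abs_mult)
        also have "\<dots> \<le> epsS * (\<bar>Yp\<bar> + \<bar>Ym\<bar>) / h\<^sup>2" using epsS_pos h
          by (intro divide_right_mono mult_left_mono abs_triangle_ineq) auto
        finally show ?thesis .
      qed
      have b: "\<bar>bi * Yp / h\<bar> = bi * \<bar>Yp\<bar> / h" using bi_pos' h by (simp add: abs_mult)
      show ?thesis unfolding ell3_Y using a b abs_triangle_ineq[of "epsS * (Yp + Ym) / h\<^sup>2" "bi * Yp / h"] by linarith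
    qed
    also have "\<dots> \<le> eps * (2 * (X * Pb)) / h\<^sup>2 + Bm * (X * Pb) / h"
    proof -
      have "epsS * (\<bar>Yp\<bar> + \<bar>Ym\<bar>) \<le> eps * (2 * (X * Pb))"
        using epsS_le epsS_pos Yp Ym by (intro mult_mono) auto
      moreover have "bi * \<bar>Yp\<bar> \<le> Bm * (X * Pb)" using bi_le bi_pos' Yp by (intro mult_mono) auto
      ultimately show ?thesis using h by (intro add_mono divide_right_mono) auto
    qed
    also have "\<dots> = X\<^sup>2 * KM kmax * Wh * (2 * k\<^sup>2 + Bm * k ^ 3)"
      unfolding Pb_eq k_def using eps_pos h by (simp add: field_simps power2_eq_square power3_eq_cube power4_eq_xxxx)
    also have "\<dots> \<le> (exp (Bm * kmax))\<^sup>2 * KM kmax * Wh * ((2 + Bm * kmax) * k\<^sup>2)"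
    proof -
      have "2 * k\<^sup>2 + Bm * k ^ 3 \<le> (2 + Bm * kmax) * k\<^sup>2"
      proof -
        have "Bm * k ^ 3 \<le> Bm * kmax * k\<^sup>2" using k consts_nonneg
          by (simp add: power2_eq_square power3_eq_cube mult_left_mono mult_right_mono mult.assoc)
        then show ?thesis by (simp add: algebra_simps)
      qed
      moreover have "X\<^sup>2 \<le> (exp (Bm * kmax))\<^sup>2" using XXM X1 unfolding XM_def by (intro power_mono) auto
      moreover have "0 \<le> KM kmax * Wh" using KM_nonneg Wh_nonneg by simp
      moreover have "0 \<le> 2 * k\<^sup>2 + Bm * k ^ 3" using k consts_nonneg by simp
      ultimately have "X\<^sup>2 * (KM kmax * Wh) * (2 * k\<^sup>2 + Bm * k ^ 3) \<le> (exp (Bm * kmax))\<^sup>2 * (KM kmax * Wh) * ((2 + Bm * kmax) * k\<^sup>2)"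
        using KM_nonneg Wh_nonneg by (intro mult_mono) auto
      then show ?thesis by (simp add: mult.assoc)
    qed
    finally show ?thesis by (simp add: algebra_simps)
  qed
  have l2: "\<bar>m1 * L2\<bar> \<le> Km1 * Bm\<^sup>2 * exp (Bm * kmax) / (2 * beta) * (k\<^sup>2 * Wh)"
  proof -
    define \<rho> where "\<rho> = bi * h / (2 * eps)"
    have rp: "\<rho> > 0" unfolding \<rho>_def using bi_pos' h eps_pos by simp
    have L2e: "L2 = (eps / bi) * (sigma \<rho> + \<rho> - 1)"
      unfolding L2_def epsS_def \<rho>_def using bi_pos' eps_pos by (simp add: field_simps)
    have sa: "\<bar>sigma \<rho> + \<rho> - 1\<bar> \<le> 2 * \<rho>\<^sup>2 * exp (2 * \<rho>)" by (rule sigma_approx[OF rp])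
    have e2: "exp (2 * \<rho>) \<le> XM" using XXM unfolding X_def \<rho>_def by simp
    have r2: "\<rho>\<^sup>2 \<le> Bm\<^sup>2 * k\<^sup>2 / 4"
    proof -
      have "\<rho> = bi * k / 2" unfolding \<rho>_def k_def by simp
      then have "\<rho> \<le> Bm * k / 2" using bi_le k by (simp add: mult_right_mono)
      then have "\<rho>\<^sup>2 \<le> (Bm * k / 2)\<^sup>2" using rp by (intro power_mono) auto
      then show ?thesis by (simp add: power2_eq_square mult_ac)
    qed
    have "\<bar>L2\<bar> \<le> (eps / beta) * (2 * (Bm\<^sup>2 * k\<^sup>2 / 4) * XM)"
    proof -
      have "\<bar>L2\<bar> = (eps / bi) * \<bar>sigma \<rho> + \<rho> - 1\<bar>" unfolding L2e using eps_pos bi_pos' by (simp add: abs_mult)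
      also have "\<dots> \<le> (eps / beta) * (2 * (Bm\<^sup>2 * k\<^sup>2 / 4) * XM)"
      proof (rule mult_mono)
        show "eps / bi \<le> eps / beta" using bi_pos beta_pos eps_pos by (intro divide_left_mono) auto
        have "2 * \<rho>\<^sup>2 * exp (2 * \<rho>) \<le> 2 * (Bm\<^sup>2 * k\<^sup>2 / 4) * XM"
          using r2 e2 by (intro mult_mono) auto
        then show "\<bar>sigma \<rho> + \<rho> - 1\<bar> \<le> 2 * (Bm\<^sup>2 * k\<^sup>2 / 4) * XM" using sa by linarith
      qed (use eps_pos beta_pos in auto)
      finally show ?thesis .
    qed
    then have "\<bar>m1 * L2\<bar> \<le> (Km1 * Wh / eps) * ((eps / beta) * (2 * (Bm\<^sup>2 * k\<^sup>2 / 4) * XM))"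
      by (intro abs_mult_le m1_bound)
    also have "\<dots> = Km1 * Bm\<^sup>2 * XM / (2 * beta) * (k\<^sup>2 * Wh)"
      using eps_pos beta_pos by (simp add: field_simps)
    finally show ?thesis unfolding XM_def .
  qed
  have "\<bar>- epsS * (((v (s0 + h) - v s0) / h - (v s0 - v (s0 - h)) / h) / ((h + h) / 2)) - bi * ((v (s0 + h) - v s0) / h) + c s0 * v s0\<bar>
      = \<bar>ell3 epsS bi h Yp 0 Ym + m1 * L2\<bar>" unfolding LN_expr_eq Yp_def Ym_def by (simp add: abs_minus_commute)
  also have "\<dots> \<le> \<bar>ell3 epsS bi h Yp 0 Ym\<bar> + \<bar>m1 * L2\<bar>" by (rule abs_triangle_ineq)
  also have "\<dots> \<le> Tc kmax * (k\<^sup>2 * Wh)" unfolding Tc_def using l1 l2 by (simp add: algebra_simps)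
  finally show ?thesis unfolding k_def by (simp add: mult.assoc)
qed

end

end

lemma LN_scale: "LN eps b c x (\<lambda>j. \<alpha> * F j) i = \<alpha> * LN eps b c x F i"
  using LN_lin[of eps b c x \<alpha> F "\<lambda>_. 0" i] LN_const[of eps b c x 0 i] by simp

locale inst = mesh a eps beta Q N Jn + cprob b c b1 b2 c1 c2 beta p eps Bm Bp Bpp Cm Cp Cpp v v1 v2
  for a eps beta Q N Jn b c b1 b2 c1 c2 p Bm Bp Bpp Cm Cp Cpp v v1 v2 +
  fixes V :: "nat \<Rightarrow> real"
  assumes V0: "V 0 = p" and VN: "V N = 0"
    and V_eq: "\<And>i. 1 \<le> i \<Longrightarrow> i \<le> N - 1 \<Longrightarrow> LN eps b c x V i = 0"
begin

definition "w j = exp (- beta * x j / eps)" for j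

lemma bx: "0 < i \<Longrightarrow> i < N \<Longrightarrow> b (x i) \<ge> beta \<and> c (x i) \<ge> 0"
  using x_interior[of i] b_gt c_nn by (auto intro: less_imp_le)

lemma x_next: "x (i+1) = x i + step x (i+1)" unfolding step_def by simp
lemma x_prev: "1 \<le> i \<Longrightarrow> x (i-1) = x i - step x i" unfolding step_def by simp

lemma LN_w: assumes i: "1 \<le> i" "i < N" shows "LN eps b c x w i \<ge> 0"
proof -
  have bc: "b (x i) \<ge> beta" "c (x i) \<ge> 0" using bx[of i] i by auto
  have w_eq: "w = (\<lambda>j. exp (- beta * x j / eps))" unfolding w_def by auto
  consider "i < Jn" | "i = Jn" | "Jn < i" by linarith
  then show ?thesis
  proof cases
    case 1
    have s1: "step x i = h" "step x (i+1) = h" using step_fine i 1 by auto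
    show ?thesis unfolding w_eq
      by (rule exp_barrier_uniform[where b=b and c=c and x=x and i=i, OF eps_pos beta_pos bc h_pos s1])
         (use x_next[of i] x_prev[of i] s1 i in auto)
  next
    case 2
    have s1: "step x i = h" "step x (i+1) = H" using step_fine[of i] step_coarse[of "i+1"] i 2 by auto
    show ?thesis unfolding w_eq
      by (rule exp_barrier_trans[where b=b and c=c and x=x and i=i, OF eps_pos beta_pos bc h_pos h_le_H s1])
         (use x_next[of i] x_prev[of i] s1 i in auto)
  next
    case 3
    have s1: "step x i = H" "step x (i+1) = H" using step_coarse i 3 by auto
    show ?thesis unfolding w_eq
      by (rule exp_barrier_uniform[where b=b and c=c and x=x and i=i, OF eps_pos beta_pos bc H_pos s1])
         (use x_next[of i] x_prev[of i] s1 i in auto)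
  qed
qed

lemma V_bound: assumes i: "i \<le> N" shows "\<bar>V i\<bar> \<le> \<bar>p\<bar> * w i"
proof -
  have "0 \<le> \<bar>p\<bar> * w i + s * V i" if s: "s = 1 \<or> s = -1" for s
  proof -
    define \<Phi> where "\<Phi> j = \<bar>p\<bar> * w j + (s * V j + 0)" for j
    have "\<forall>j\<in>{0..N}. \<Phi> j \<ge> 0"
    proof (rule dmp[OF N_pos _ _ eps_pos])
      show "\<Phi> 0 \<ge> 0" unfolding \<Phi>_def w_def using V0 s x0 by (auto simp: abs_if)
      show "\<Phi> N \<ge> 0" unfolding \<Phi>_def w_def using VN by simp
      show "step x j > 0" if "0 < j" "j \<le> N" for j using step_pos that by simp
      show "b (x j) > 0" if "0 < j" "j < N" for j using bx[OF that] beta_pos by simp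
      show "c (x j) \<ge> 0" if "0 < j" "j < N" for j using bx[OF that] by simp
      show "LN eps b c x \<Phi> j \<ge> 0" if j: "0 < j" "j < N" for j
      proof -
        have "LN eps b c x \<Phi> j = \<bar>p\<bar> * LN eps b c x w j + (s * LN eps b c x V j + c (x j) * 0)"
          unfolding \<Phi>_def LN_lin LN_const by simp
        also have "\<dots> = \<bar>p\<bar> * LN eps b c x w j" using V_eq[of j] j by simp
        also have "\<dots> \<ge> 0" using LN_w[of j] j by simp
        finally show ?thesis .
      qed
    qed
    then show ?thesis using i unfolding \<Phi>_def by auto
  qed
  from this[of 1] this[of "-1"] show ?thesis by auto
qed

definition "e i = v (x i) - V i" for i

lemma e_coarse: assumes i: "Jn \<le> i" "i \<le> N" shows "\<bar>e i\<bar> \<le> 2 * \<bar>p\<bar> * real N powr (- a)"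
proof -
  have xi_le: "xi \<le> x i" using x_mono[OF i(1)] x_fine[of Jn] xi_eq by simp
  have ew: "exp (- beta * x i / eps) \<le> real N powr (- a)"
  proof -
    have "- beta * x i / eps \<le> - beta * xi / eps" using xi_le beta_pos eps_pos by (simp add: divide_right_mono)
    then show ?thesis using exp_xi by (metis exp_le_cancel_iff)
  qed
  have "\<bar>e i\<bar> \<le> \<bar>v (x i)\<bar> + \<bar>V i\<bar>" unfolding e_def by simp
  also have "\<dots> \<le> \<bar>p\<bar> * exp (- beta * x i / eps) + \<bar>p\<bar> * exp (- beta * x i / eps)"
    using v_bound[of "x i"] x_in01[OF i(2)] V_bound[OF i(2)] unfolding W_def w_def by (intro add_mono) auto
  also have "\<dots> \<le> 2 * \<bar>p\<bar> * real N powr (- a)" using ew by (simp add: mult_left_mono)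
  finally show ?thesis .
qed

definition "kmax = a / (beta * Q)"

lemma tau_fine:
  assumes i: "1 \<le> i" "i < Jn"
  shows "\<bar>LN eps b c x (\<lambda>j. v (x j)) i\<bar> \<le> Tc kmax * k\<^sup>2 * W (x i - h)"
proof -
  have s1: "step x i = h" "step x (i+1) = h" using step_fine i by auto
  have xp: "x (i+1) = x i + h" using x_next[of i] s1 by simp
  have xm: "x (i-1) = x i - h" using x_prev[of i] s1 i by simp
  have c1: "0 \<le> x i - h" using x_fine[of i] i h_pos by (simp add: algebra_simps)
  have c2: "x i + h < 1"
  proof -
    have "x i + h = x (i+1)" using xp by simp
    also have "\<dots> \<le> xi"
    proof -
      have "real (i+1) \<le> real Jn" using i by simp
      then have "real (i+1) * h \<le> real Jn * h" using h_pos by (intro mult_right_mono) auto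
      then show ?thesis using x_fine[of "i+1"] i xi_eq by simp
    qed
    also have "\<dots> < 1" using xi_leQ Q_lt1 by simp
    finally show ?thesis .
  qed
  have c3: "h / eps \<le> kmax" using k_le unfolding k_def kmax_def .
  note tb = trunc_bound[OF c1 c2 h_pos c3]
  show ?thesis using tb[unfolded epsS_def[OF c1 c2 h_pos c3] Wh_def[OF c1 c2 h_pos c3]] unfolding LN_unfold s1 xp xm k_def by (simp add: algebra_simps)
qed

lemma Tc_nonneg: "Tc kmax \<ge> 0"
proof -
  have km: "kmax \<ge> 0" unfolding kmax_def using a_pos beta_pos Q_pos by simp
  have "KM kmax \<ge> 0" unfolding KM_def using consts_nonneg K1_nonneg K2_nonneg K3_nonneg km by simp
  moreover have "Km1 \<ge> 0" unfolding Km1_def using consts_nonneg K1_nonneg by simp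
  ultimately show ?thesis unfolding Tc_def using km consts_nonneg beta_pos by simp
qed

definition "r = 1 + (beta / 2) * k"
definition "Cf = Tc kmax * \<bar>p\<bar> * exp (beta * kmax)"
definition "gam = 4 * Cf / beta\<^sup>2 * (eps * k\<^sup>2)"

lemma r_gt1: "r > 1" unfolding r_def using beta_pos k_pos by simp

lemma Psi_lower: "exp (- (beta / 2) * k * real n) \<le> inverse r ^ n"
proof -
  have "r \<le> exp ((beta / 2) * k)" unfolding r_def using exp_ge_add_one_self[of "(beta/2) * k"] by linarith
  then have "exp (- (beta / 2) * k) \<le> inverse r" using r_gt1
    by (simp add: exp_minus le_imp_inverse_le)
  then have "exp (- (beta / 2) * k) ^ n \<le> inverse r ^ n" by (intro power_mono) auto
  then show ?thesis by (simp add: exp_of_nat_mult[symmetric] mult_ac)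
qed

lemma tau_fine2:
  assumes i: "1 \<le> i" "i < Jn"
  shows "\<bar>LN eps b c x (\<lambda>j. v (x j)) i\<bar> \<le> Cf * k\<^sup>2 * inverse r ^ (i+1)"
proof -
  have xi: "x i - h = (real i - 1) * h" using x_fine[of i] i by (simp add: algebra_simps)
  have Wx: "W (x i - h) \<le> \<bar>p\<bar> * exp (beta * kmax) * inverse r ^ (i+1)"
  proof -
    have e1: "- beta * (x i - h) / eps = - beta * k * (real i - 1)"
      unfolding xi k_def using eps_pos by (simp add: field_simps)
    have "- beta * k * (real i - 1) \<le> - (beta / 2) * k * real (i+1) + beta * kmax"
    proof -
      have "- beta * k * (real i - 1) = - (beta / 2) * k * real (i+1) + beta * k - (beta/2) * k * (real i - 1)"
        by (simp add: field_simps)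
      also have "\<dots> \<le> - (beta / 2) * k * real (i+1) + beta * kmax"
      proof -
        have "beta * k \<le> beta * kmax" using k_le beta_pos unfolding kmax_def by (intro mult_left_mono) auto
        moreover have "0 \<le> (beta/2) * k * (real i - 1)" using i beta_pos k_pos by simp
        ultimately show ?thesis by linarith
      qed
      finally show ?thesis .
    qed
    then have "exp (- beta * (x i - h) / eps) \<le> exp (- (beta / 2) * k * real (i+1)) * exp (beta * kmax)"
      unfolding e1 by (simp add: exp_add[symmetric])
    also have "\<dots> \<le> inverse r ^ (i+1) * exp (beta * kmax)"
      using Psi_lower[of "i+1"] by (intro mult_right_mono) auto
    finally show ?thesis unfolding W_def by (simp add: mult_left_mono mult_ac)
  qed
  have "\<bar>LN eps b c x (\<lambda>j. v (x j)) i\<bar> \<le> Tc kmax * k\<^sup>2 * W (x i - h)" by (rule tau_fine[OF i])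
  also have "\<dots> \<le> Tc kmax * k\<^sup>2 * (\<bar>p\<bar> * exp (beta * kmax) * inverse r ^ (i+1))"
    using Wx Tc_nonneg by (intro mult_left_mono) auto
  also have "\<dots> = Cf * k\<^sup>2 * inverse r ^ (i+1)" unfolding Cf_def by (simp add: mult_ac)
  finally show ?thesis .
qed

lemma e_fine:
  assumes i: "i \<le> Jn"
  shows "\<bar>e i\<bar> \<le> gam + 2 * \<bar>p\<bar> * real N powr (- a)"
proof -
  define Bd where "Bd = 2 * \<bar>p\<bar> * real N powr (- a)"
  have Bd0: "Bd \<ge> 0" unfolding Bd_def by simp
  have Cf0: "Cf \<ge> 0" unfolding Cf_def using Tc_nonneg by simp
  have gam0: "gam \<ge> 0" unfolding gam_def using Cf0 eps_pos beta_pos by simp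
  have e0: "e 0 = 0" unfolding e_def using x0 v0 V0 by simp
  have eJ: "\<bar>e Jn\<bar> \<le> Bd" unfolding Bd_def using e_coarse[of Jn] Jn_lt by simp
  have "0 \<le> gam * inverse r ^ i + (s * e i + Bd)" if s: "s = 1 \<or> s = -1" for s
  proof -
    define \<Phi> where "\<Phi> j = gam * inverse r ^ j + (s * e j + Bd)" for j
    have "\<forall>j\<in>{0..Jn}. \<Phi> j \<ge> 0"
    proof (rule dmp[OF Jn_pos _ _ eps_pos])
      show "\<Phi> 0 \<ge> 0" unfolding \<Phi>_def using e0 gam0 Bd0 by simp
      show "\<Phi> Jn \<ge> 0" unfolding \<Phi>_def using eJ s gam0 r_gt1 by (auto simp: abs_if split: if_splits)
      show "step x j > 0" if "0 < j" "j \<le> Jn" for j using step_pos that by simp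
      show "b (x j) > 0" if "0 < j" "j < Jn" for j using bx[of j] that Jn_lt beta_pos by simp
      show "c (x j) \<ge> 0" if "0 < j" "j < Jn" for j using bx[of j] that Jn_lt by simp
      show "LN eps b c x \<Phi> j \<ge> 0" if j: "0 < j" "j < Jn" for j
      proof -
        have jN: "j < N" using j Jn_lt by simp
        have LNe: "LN eps b c x e j = LN eps b c x (\<lambda>j. v (x j)) j"
          unfolding e_def[abs_def] LN_diff using V_eq[of j] j jN by simp
        have s1: "step x j = h" "step x (j+1) = h" using step_fine j by auto
        have bc: "b (x j) \<ge> beta" "c (x j) \<ge> 0" using bx[of j] j jN by auto
        have fb: "LN eps b c x (\<lambda>j. inverse r ^ j) j \<ge> beta\<^sup>2 / (4 * eps) * inverse r ^ (j+1)"
          by (rule fine_barrier[where b=b and c=c and x=x and i=j, OF eps_pos beta_pos bc h_pos s1])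
             (use j in \<open>auto simp: r_def k_def\<close>)
        have tf: "\<bar>LN eps b c x e j\<bar> \<le> Cf * k\<^sup>2 * inverse r ^ (j+1)"
          unfolding LNe using tau_fine2[of j] j by simp
        have "LN eps b c x \<Phi> j = gam * LN eps b c x (\<lambda>j. inverse r ^ j) j + (s * LN eps b c x e j + c (x j) * Bd)"
          unfolding \<Phi>_def LN_lin LN_const by simp
        also have "\<dots> \<ge> 0"
        proof -
          have "gam * LN eps b c x (\<lambda>j. inverse r ^ j) j \<ge> gam * (beta\<^sup>2 / (4 * eps) * inverse r ^ (j+1))"
            using fb gam0 by (intro mult_left_mono) auto
          moreover have "gam * (beta\<^sup>2 / (4 * eps) * inverse r ^ (j+1)) = Cf * k\<^sup>2 * inverse r ^ (j+1)"
            unfolding gam_def using eps_pos beta_pos by (simp add: field_simps power2_eq_square)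
          moreover have "s * LN eps b c x e j \<ge> - \<bar>LN eps b c x e j\<bar>" using s by auto
          moreover have "c (x j) * Bd \<ge> 0" using bc Bd0 by simp
          ultimately show ?thesis using tf by linarith
        qed
        finally show ?thesis .
      qed
    qed
    then show ?thesis using i unfolding \<Phi>_def by auto
  qed
  from this[of 1] this[of "-1"] have "\<bar>e i\<bar> \<le> gam * inverse r ^ i + Bd" by auto
  also have "gam * inverse r ^ i \<le> gam"
  proof -
    have "inverse r ^ i \<le> 1" using r_gt1 by (intro power_le_one) (auto simp: inverse_le_1_iff)
    then show ?thesis using gam0 by (intro mult_left_le) auto
  qed
  finally show ?thesis unfolding Bd_def by simp
qed

definition "Cfin = 2 * \<bar>p\<bar> + 4 * Cf / beta\<^sup>2 * (a / (beta * Q))\<^sup>2"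

lemma err_bound:
  assumes i: "i \<le> N"
  shows "\<bar>v (x i) - V i\<bar> \<le> Cfin * max (eps * real N powr (-2) * (ln (real N))\<^sup>2) (real N powr (- a))"
proof -
  define M where "M = max (eps * real N powr (-2) * (ln (real N))\<^sup>2) (real N powr (- a))"
  have M1: "eps * real N powr (-2) * (ln (real N))\<^sup>2 \<le> M" and M2: "real N powr (- a) \<le> M"
    unfolding M_def by auto
  have Cf0: "Cf \<ge> 0" unfolding Cf_def using Tc_nonneg by simp
  have gamM: "gam \<le> 4 * Cf / beta\<^sup>2 * (a / (beta * Q))\<^sup>2 * M"
  proof -
    have "gam = 4 * Cf / beta\<^sup>2 * (a / (beta * Q))\<^sup>2 * (eps * real N powr (-2) * (ln (real N))\<^sup>2)"
      unfolding gam_def eps_k2 by simp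
    also have "\<dots> \<le> 4 * Cf / beta\<^sup>2 * (a / (beta * Q))\<^sup>2 * M"
      using M1 Cf0 beta_pos by (intro mult_left_mono) auto
    finally show ?thesis .
  qed
  have pM: "2 * \<bar>p\<bar> * real N powr (- a) \<le> 2 * \<bar>p\<bar> * M" using M2 by (simp add: mult_left_mono)
  have "\<bar>e i\<bar> \<le> gam + 2 * \<bar>p\<bar> * real N powr (- a)"
  proof (cases "i \<le> Jn")
    case True then show ?thesis by (rule e_fine)
  next
    case False
    then have "\<bar>e i\<bar> \<le> 2 * \<bar>p\<bar> * real N powr (- a)" using e_coarse[of i] i by simp
    moreover have "gam \<ge> 0" unfolding gam_def using Cf0 eps_pos beta_pos by simp
    ultimately show ?thesis by simp
  qed
  also have "\<dots> \<le> Cfin * M" unfolding Cfin_def using gamM pM by (simp add: algebra_simps)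
  finally show ?thesis unfolding e_def M_def .
qed

lemma err_bound':
  assumes i: "i \<le> N"
  shows "\<bar>v (x i) - V i\<bar> \<le> (2 * \<bar>p\<bar> + 4 * (Tc (a / (beta * Q)) * \<bar>p\<bar> * exp (beta * (a / (beta * Q)))) / beta\<^sup>2 * (a / (beta * Q))\<^sup>2)
     * max (eps * real N powr (-2) * (ln (real N))\<^sup>2) (real N powr (- a))"
  using err_bound[OF i] unfolding Cfin_def Cf_def kmax_def .

end

lemma cont_bounded:
  assumes "continuous_on {0..1::real} g"
  shows "\<exists>B. \<forall>x\<in>{0..1}. \<bar>(g::real\<Rightarrow>real) x\<bar> \<le> B"
proof -
  have "bounded (g ` {0..1})" by (rule compact_imp_bounded[OF compact_continuous_image[OF assms compact_Icc]])
  then obtain B where "\<forall>y\<in>g ` {0..1}. norm y \<le> B" unfolding bounded_iff by blast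
  then show ?thesis by auto
qed

lemma deriv_interior:
  assumes "(g has_real_derivative g') (at x within {0..1})" "0 < x" "x < 1"
  shows "(g has_real_derivative g') (at x)"
proof -
  have "x \<in> interior {0..1::real}" using assms(2,3) interior_atLeastAtMost_real by auto
  then have "at x within {0..1} = at x" by (rule at_within_interior)
  then show ?thesis using assms(1) by simp
qed

lemma LN_linear:
  assumes "step x i \<noteq> 0" "step x (i+1) \<noteq> 0"
  shows "LN eps b c x (\<lambda>j. p * x j + q) i = - b (x i) * p + c (x i) * (p * x i + q)"
proof -
  have e1: "p * x (i+1) + q - (p * x i + q) = p * step x (i+1)" by (simp add: step_def algebra_simps)
  have e2: "p * x i + q - (p * x (i-1) + q) = p * step x i" by (simp add: step_def algebra_simps)
  have dp: "Dplus x (\<lambda>j. p * x j + q) i = p" unfolding Dplus_def e1 using assms(2) by simp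
  have dm: "Dminus x (\<lambda>j. p * x j + q) i = p" unfolding Dminus_def e2 using assms(1) by simp
  show ?thesis unfolding LN_def Let_def D2_def dp dm by simp
qed

lemma Ck_data:
  assumes "Ck_on 4 {0..1} g"
  obtains D B0 B1 B2 where "\<forall>x\<in>{0..1}. (D :: nat \<Rightarrow> real \<Rightarrow> real) 0 x = g x"
    "\<And>x. 0 < x \<Longrightarrow> x < 1 \<Longrightarrow> (g has_real_derivative D 1 x) (at x)"
    "\<And>x. 0 < x \<Longrightarrow> x < 1 \<Longrightarrow> (D 1 has_real_derivative D 2 x) (at x)"
    "\<And>x. 0 \<le> x \<Longrightarrow> x \<le> 1 \<Longrightarrow> \<bar>g x\<bar> \<le> B0"
    "\<And>x. 0 \<le> x \<Longrightarrow> x \<le> 1 \<Longrightarrow> \<bar>D 1 x\<bar> \<le> B1"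
    "\<And>x. 0 \<le> x \<Longrightarrow> x \<le> 1 \<Longrightarrow> \<bar>D 2 x\<bar> \<le> B2"
proof -
  obtain D where D0: "\<forall>x\<in>{0..1}. D 0 x = g x"
    and Dd: "\<forall>j<4. \<forall>x\<in>{0..1}. (D j has_real_derivative D (Suc j) x) (at x within {0..1})"
    and Dc: "\<forall>j\<le>4. continuous_on {0..1} (D j)"
    using assms unfolding Ck_on_def by blast
  have c0: "continuous_on {0..1} (D 0)" using Dc[rule_format, of 0] by simp
  have c1: "continuous_on {0..1} (D 1)" using Dc[rule_format, of 1] by simp
  have c2: "continuous_on {0..1} (D 2)" using Dc[rule_format, of 2] by simp
  obtain B0 where B0: "\<forall>x\<in>{0..1}. \<bar>D 0 x\<bar> \<le> B0" using cont_bounded[OF c0] by blast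
  obtain B1 where B1: "\<forall>x\<in>{0..1}. \<bar>D 1 x\<bar> \<le> B1" using cont_bounded[OF c1] by blast
  obtain B2 where B2: "\<forall>x\<in>{0..1}. \<bar>D 2 x\<bar> \<le> B2" using cont_bounded[OF c2] by blast
  show ?thesis
  proof (rule that[of D B0 B1 B2])
    show "\<forall>x\<in>{0..1}. D 0 x = g x" by (rule D0)
    fix x :: real
    assume x: "0 < x" "x < 1"
    have x01: "x \<in> {0..1}" using x by simp
    have d0: "(D 0 has_real_derivative D 1 x) (at x)"
      using deriv_interior[OF Dd[rule_format, of 0 x, OF _ x01] x] by simp
    show "(g has_real_derivative D 1 x) (at x)"
      by (rule has_field_derivative_transform_within_open[OF d0, of "{0<..<1}"]) (use x D0 in auto)
    show "(D 1 has_real_derivative D 2 x) (at x)"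
      using deriv_interior[OF Dd[rule_format, of 1 x, OF _ x01] x] by (simp add: numeral_2_eq_2)
  next
    fix x :: real assume "0 \<le> x" "x \<le> 1"
    then show "\<bar>g x\<bar> \<le> B0" "\<bar>D 1 x\<bar> \<le> B1" "\<bar>D 2 x\<bar> \<le> B2" using B0 B1 B2 D0 by auto
  qed
qed

theorem theorem6:
  fixes b c f u0 :: "real \<Rightarrow> real" and beta Q a :: real
  assumes b_C4: "Ck_on 4 {0..1} b" and c_C4: "Ck_on 4 {0..1} c" and f_C4: "Ck_on 4 {0..1} f"
    and beta_pos: "beta > 0" and b_gt: "\<forall>x\<in>{0..1}. b x > beta"
    and c_nonneg: "\<forall>x\<in>{0..1}. c x \<ge> 0"
    and u0_red: "reduced_solution b c f u0"
    and u0_lin: "\<exists>p q. \<forall>x\<in>{0..1}. u0 x = p * x + q"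
    and Q_rat: "Q \<in> \<rat>" and Q_pos: "0 < Q" and Q_lt1: "Q < 1"
    and a_ge: "a \<ge> beta / (b 0 - beta)"
  shows "\<exists>C. \<forall>eps N u U.
     0 < eps \<longrightarrow> eps < 1 \<longrightarrow> 0 < N \<longrightarrow> Q * real N \<in> \<int> \<longrightarrow>
     trans_pt a eps beta (real N) \<le> Q \<longrightarrow>
     bvp_solution eps b c f u \<longrightarrow>
     U 0 = 0 \<longrightarrow> U N = 0 \<longrightarrow>
     (\<forall>i. 1 \<le> i \<and> i \<le> N - 1 \<longrightarrow>
        LN eps b c (shishkin_mesh (real N) a eps beta Q N) U i
          = f (shishkin_mesh (real N) a eps beta Q N i)) \<longrightarrow>
     (MAX i\<in>{0..N}. \<bar>u (shishkin_mesh (real N) a eps beta Q N i) - U i\<bar>)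
       \<le> C * max (eps * real N powr (-2) * (ln (real N))\<^sup>2) (real N powr (- a))"
proof -
  obtain Db Bm Bp Bpp where Db0: "\<forall>x\<in>{0..1}. (Db :: nat \<Rightarrow> real \<Rightarrow> real) 0 x = b x"
    and b_der: "\<And>x. 0 < x \<Longrightarrow> x < 1 \<Longrightarrow> (b has_real_derivative Db 1 x) (at x)"
    and b1_der: "\<And>x. 0 < x \<Longrightarrow> x < 1 \<Longrightarrow> (Db 1 has_real_derivative Db 2 x) (at x)"
    and b_bd: "\<And>x. 0 \<le> x \<Longrightarrow> x \<le> 1 \<Longrightarrow> \<bar>b x\<bar> \<le> Bm"
    and b1_bd: "\<And>x. 0 \<le> x \<Longrightarrow> x \<le> 1 \<Longrightarrow> \<bar>Db 1 x\<bar> \<le> Bp"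
    and b2_bd: "\<And>x. 0 \<le> x \<Longrightarrow> x \<le> 1 \<Longrightarrow> \<bar>Db 2 x\<bar> \<le> Bpp"
    by (rule Ck_data[OF b_C4]) (rule that)
  obtain Dc Cm Cp Cpp where Dc0: "\<forall>x\<in>{0..1}. (Dc :: nat \<Rightarrow> real \<Rightarrow> real) 0 x = c x"
    and c_der: "\<And>x. 0 < x \<Longrightarrow> x < 1 \<Longrightarrow> (c has_real_derivative Dc 1 x) (at x)"
    and c1_der: "\<And>x. 0 < x \<Longrightarrow> x < 1 \<Longrightarrow> (Dc 1 has_real_derivative Dc 2 x) (at x)"
    and c_bd: "\<And>x. 0 \<le> x \<Longrightarrow> x \<le> 1 \<Longrightarrow> \<bar>c x\<bar> \<le> Cm"
    and c1_bd: "\<And>x. 0 \<le> x \<Longrightarrow> x \<le> 1 \<Longrightarrow> \<bar>Dc 1 x\<bar> \<le> Cp"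
    and c2_bd: "\<And>x. 0 \<le> x \<Longrightarrow> x \<le> 1 \<Longrightarrow> \<bar>Dc 2 x\<bar> \<le> Cpp"
    by (rule Ck_data[OF c_C4]) (rule that)
  obtain p q where pq: "\<forall>x\<in>{0..1}. u0 x = p * x + q" using u0_lin by blast
  obtain u0' where u0c: "u0 1 = 0"
    and u0d: "\<forall>x\<in>{0<..<1}. (u0 has_real_derivative u0' x) (at x) \<and> - b x * u0' x + c x * u0 x = f x"
    using u0_red unfolding reduced_solution_def by blast
  have qp: "q = - p" using pq[rule_format, of 1] u0c by simp
  have f_eq: "f x = - b x * p + c x * (p * x - p)" if x: "0 < x" "x < 1" for x
  proof -
    have d1: "((\<lambda>t. p * t + q) has_real_derivative p) (at x)" by (auto intro!: derivative_eq_intros)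
    have "(u0 has_real_derivative p) (at x)"
      by (rule has_field_derivative_transform_within_open[OF d1, of "{0<..<1}"]) (use x pq in auto)
    moreover have "(u0 has_real_derivative u0' x) (at x)" and fx: "- b x * u0' x + c x * u0 x = f x"
      using u0d x by auto
    ultimately have "u0' x = p" using DERIV_unique by blast
    moreover have "u0 x = p * x - p" using pq x qp by simp
    ultimately show ?thesis using fx by simp
  qed
  have a_pos: "a > 0"
  proof -
    have "b 0 > beta" using b_gt by simp
    then have "beta / (b 0 - beta) > 0" using beta_pos by simp
    then show ?thesis using a_ge by simp
  qed
  define C where "C = 2 * \<bar>p\<bar> + 4 * (cprob.Tc beta Bm Bp Bpp Cm Cp Cpp (a / (beta * Q)) * \<bar>p\<bar>
      * exp (beta * (a / (beta * Q)))) / beta\<^sup>2 * (a / (beta * Q))\<^sup>2"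
  show ?thesis
  proof (intro exI[of _ C] allI impI)
    fix eps :: real and N :: nat and u U :: "_ \<Rightarrow> real"
    assume eps: "0 < eps" and eps1: "eps < 1" and N: "0 < N" and QN: "Q * real N \<in> \<int>"
      and xiQ: "trans_pt a eps beta (real N) \<le> Q" and bvp: "bvp_solution eps b c f u"
      and U0: "U 0 = 0" and UN: "U N = 0"
      and Ueq: "\<forall>i. 1 \<le> i \<and> i \<le> N - 1 \<longrightarrow>
        LN eps b c (shishkin_mesh (real N) a eps beta Q N) U i = f (shishkin_mesh (real N) a eps beta Q N i)"
    obtain z where z: "Q * real N = of_int z" using QN by (auto elim: Ints_cases)
    have "(0::real) \<le> Q * real N" using Q_pos by simp
    then have "(0::real) \<le> of_int z" by (simp only: z)
    then have "z \<ge> 0" by simp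
    define Jn where "Jn = nat z"
    have Jn: "real Jn = Q * real N" unfolding Jn_def using z \<open>z \<ge> 0\<close> by simp
    interpret M: mesh a eps beta Q N Jn
      by unfold_locales (use eps beta_pos a_pos Q_pos Q_lt1 Jn N xiQ in auto)
    obtain u' u'' where uc: "continuous_on {0..1} u" and u0e: "u 0 = 0" and u1e: "u 1 = 0"
      and ud: "\<forall>x\<in>{0<..<1}. (u has_real_derivative u' x) (at x) \<and> (u' has_real_derivative u'' x) (at x) \<and>
        - eps * u'' x - b x * u' x + c x * u x = f x"
      using bvp unfolding bvp_solution_def by blast
    define v where "v t = u t - (p * t - p)" for t
    define v1 where "v1 t = u' t - p" for t
    define V where "V i = U i - (p * M.x i - p)" for i
    interpret I: inst a eps beta Q N Jn b c "Db 1" "Db 2" "Dc 1" "Dc 2" p Bm Bp Bpp Cm Cp Cpp v v1 u'' V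
    proof unfold_locales
      show "continuous_on {0..1} v" unfolding v_def[abs_def] by (intro continuous_intros uc)
      show "v 0 = p" unfolding v_def using u0e by simp
      show "v 1 = 0" unfolding v_def using u1e by simp
      fix x :: real
      assume x: "0 < x" "x < 1"
      show "(v has_real_derivative v1 x) (at x)" unfolding v_def[abs_def] v1_def
        using ud x by (auto intro!: derivative_eq_intros)
      show "(v1 has_real_derivative u'' x) (at x)" unfolding v1_def[abs_def]
        using ud x by (auto intro!: derivative_eq_intros)
      show "eps * u'' x + b x * v1 x - c x * v x = 0"
        unfolding v1_def v_def using ud x f_eq[OF x] by (auto simp: algebra_simps)
    next
      show "V 0 = p" unfolding V_def using U0 M.x0 by simp
      show "V N = 0" unfolding V_def using UN M.xN by simp
      fix i :: nat assume i: "1 \<le> i" "i \<le> N - 1"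
      have iN: "0 < i" "i < N" using i N by auto
      have st: "step M.x i \<noteq> 0" "step M.x (i+1) \<noteq> 0"
        using M.step_pos[of i] M.step_pos[of "i+1"] i by auto
      have "LN eps b c M.x V i = LN eps b c M.x U i - LN eps b c M.x (\<lambda>j. p * M.x j + (- p)) i"
        unfolding V_def[abs_def] by (simp add: LN_diff[symmetric])
      also have "\<dots> = 0"
        using Ueq[rule_format, of i] i LN_linear[OF st, of eps b c p "- p"] f_eq[of "M.x i"] M.x_interior[OF iN]
        unfolding M.x_def by (simp add: algebra_simps)
      finally show "LN eps b c M.x V i = 0" .
    qed (fact beta_pos eps eps1 b_bd b1_bd b2_bd c_bd c1_bd c2_bd b_der b1_der c_der c1_der
         | use b_gt c_nonneg in simp)+
    have fin: "finite {0..N}" "{0..N} \<noteq> {}" by auto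
    show "(MAX i\<in>{0..N}. \<bar>u (shishkin_mesh (real N) a eps beta Q N i) - U i\<bar>)
       \<le> C * max (eps * real N powr (-2) * (ln (real N))\<^sup>2) (real N powr (- a))"
    proof (rule Max.boundedI)
      show "finite ((\<lambda>i. \<bar>u (shishkin_mesh (real N) a eps beta Q N i) - U i\<bar>) ` {0..N})" by simp
      show "(\<lambda>i. \<bar>u (shishkin_mesh (real N) a eps beta Q N i) - U i\<bar>) ` {0..N} \<noteq> {}" by simp
      fix y assume "y \<in> (\<lambda>i. \<bar>u (shishkin_mesh (real N) a eps beta Q N i) - U i\<bar>) ` {0..N}"
      then obtain i where i: "i \<le> N" and y: "y = \<bar>u (shishkin_mesh (real N) a eps beta Q N i) - U i\<bar>" by auto
      have "y = \<bar>v (M.x i) - V i\<bar>" unfolding y v_def V_def M.x_def by (simp add: algebra_simps)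
      also have "\<dots> \<le> C * max (eps * real N powr (-2) * (ln (real N))\<^sup>2) (real N powr (- a))"
        using I.err_bound'[OF i] unfolding C_def .
      finally show "y \<le> C * max (eps * real N powr (-2) * (ln (real N))\<^sup>2) (real N powr (- a))" .
    qed
  qed
qed

end
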